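(* Let $q$ be a complex number with $0<|q|<1$. For $z\in\mathbb{C}^*$ generic (i.e. avoiding the poles of the functions below), \begin{align*} & z\, j(z^{-1}q;q)\, m(q,q^3,z) + z\, j(z^{-2}q;q)\, m(z^3q,q^3,z^{-1}) + z^2 j(zq;q)\, m(q,q^3,z^{-1}) + z^2 j(z^{2}q;q)\, m(z^{-3}q,q^3,z)\\ &= - j(z^2;q)\, m(z^{-3}q,q^3,z^2) + z\, j(z^2;q)\, m(z^3q,q^3,z^{-2}). \end{align*}
   Context: For $|q|<1$, $(a;q)_\infty=\prod_{n\ge 0}(1-aq^n)$ and $j(z;q):=(z;q)_\infty(z^{-1}q;q)_\infty(q;q)_\infty=\sum_{n\in\mathbb{Z}}(-1)^n z^n q^{n(n-1)/2}$. The Appell–Lerch function is $$m(x,q,z):=\frac{1}{j(z;q)}\sum_{r=-\infty}^{\infty}\frac{(-1)^rq^{\binom{r}{2}}z^r}{1-q^{r-1}xz},$$ defined for $x,z\in\mathbb{C}^*$ with $j(z;q)\neq 0$ and no vanishing denominators. *)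

theory Defs
  imports "HOL-Analysis.Analysis"
begin

definition qpoch :: "complex \<Rightarrow> complex \<Rightarrow> complex" where
  "qpoch a q = (\<Prod>n. (1 - a * q ^ n))"

definition jtheta :: "complex \<Rightarrow> complex \<Rightarrow> complex" where
  "jtheta z q = qpoch z q * qpoch (q / z) q * qpoch q q"

text \<open>Note binomial(r,2) = r(r-1)/2 is a nonnegative integer for every integer r.\<close>
definition appell_m :: "complex \<Rightarrow> complex \<Rightarrow> complex \<Rightarrow> complex" where
  "appell_m x q z = (1 / jtheta z q) *
     (\<Sum>\<^sub>\<infinity>r\<in>(UNIV::int set).
        (-1) powi r * q ^ nat (r * (r - 1) div 2) * z powi r / (1 - q powi (r - 1) * x * z))"

definition m_defined :: "complex \<Rightarrow> complex \<Rightarrow> complex \<Rightarrow> bool" where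
  "m_defined x q z \<longleftrightarrow> x \<noteq> 0 \<and> z \<noteq> 0 \<and> jtheta z q \<noteq> 0 \<and>
     (\<forall>r::int. 1 - q powi (r - 1) * x * z \<noteq> 0)"

end

theory Submission imports Defs "HOL-Complex_Analysis.Complex_Analysis"
begin

definition tri :: "int \<Rightarrow> int" where "tri r = r*(r-1) div 2"

lemma tri_nonneg: "0 \<le> tri r"
proof -
  have "0 \<le> r*(r-1)" by (cases "r \<ge> 1") (auto simp: mult_nonneg_nonneg mult_nonpos_nonpos)
  then show ?thesis by (simp add: tri_def)
qed

lemma pow_tri: "(p::'a::division_ring) ^ nat (r*(r-1) div 2) = p powi tri r"
  using tri_nonneg[of r] by (simp add: tri_def power_int_def)

lemma tri_succ: "tri (r+1) = tri r + r"
proof -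
  have "(r+1)*(r+1-1) = r*(r-1) + r*2" by (simp add: algebra_simps)
  then show ?thesis unfolding tri_def by simp
qed

lemma tri_pred: "tri (r-1) = tri r - (r - 1)"
  using tri_succ[of "r-1"] by simp

lemma tri_refl: "tri (1 - r) = tri r"
proof -
  have "(1-r)*(1-r-1) = r*(r-1)" by (simp add: algebra_simps)
  then show ?thesis unfolding tri_def by simp
qed

lemma tri_0 [simp]: "tri 0 = 0" and tri_1 [simp]: "tri 1 = 0"
  by (simp_all add: tri_def)

lemma int_split_has_sum:
  fixes f :: "int \<Rightarrow> 'a::banach"
  assumes "summable (\<lambda>n. norm (f (int n)))" "summable (\<lambda>n. norm (f (- int n - 1)))"
  shows "f summable_on UNIV"
proof -
  have A: "(f has_sum (\<Sum>n. f (int n))) (range int)"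
  proof -
    have "((f \<circ> int) has_sum (\<Sum>n. f (int n))) UNIV"
      using assms(1) by (intro norm_summable_imp_has_sum) (auto intro!: summable_sums summable_norm_cancel simp: o_def)
    then show ?thesis by (subst has_sum_reindex) (auto simp: inj_on_def)
  qed
  have B: "(f has_sum (\<Sum>n. f (- int n - 1))) (range (\<lambda>n. - int n - 1))"
  proof -
    have "((f \<circ> (\<lambda>n. - int n - 1)) has_sum (\<Sum>n. f (- int n - 1))) UNIV"
      using assms(2) by (intro norm_summable_imp_has_sum) (auto intro!: summable_sums summable_norm_cancel simp: o_def)
    then show ?thesis by (subst has_sum_reindex) (auto simp: inj_on_def)
  qed
  have U: "range int \<union> range (\<lambda>n. - int n - 1) = (UNIV :: int set)"
  proof (safe)
    fix x :: int assume "x \<notin> range (\<lambda>n. - int n - 1)"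
    have "x \<ge> 0"
    proof (rule ccontr)
      assume "\<not> x \<ge> 0"
      then have "x = - int (nat (- x - 1)) - 1" by simp
      then have "x \<in> range (\<lambda>n. - int n - 1)" by blast
      with \<open>x \<notin> _\<close> show False by blast
    qed
    then show "x \<in> range int" using nonneg_int_cases by blast
  qed auto
  have "(f has_sum ((\<Sum>n. f (int n)) + (\<Sum>n. f (- int n - 1)))) (range int \<union> range (\<lambda>n. - int n - 1))"
    by (rule has_sum_Un_disjoint[OF A B]) auto
  then show ?thesis using U by (metis summable_on_def)
qed

lemma weight_summable:
  fixes \<rho> a :: real
  assumes "0 < \<rho>" "\<rho> < 1" "0 < a"
  shows "(\<lambda>r::int. \<rho> powi tri r * a powi r) summable_on UNIV"
proof (rule int_split_has_sum)
  define g where "g n = \<rho> powi tri (int n) * a powi (int n)" for n :: nat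
  have gS: "g (Suc n) = g n * (\<rho> ^ n * a)" for n
  proof -
    have t: "tri (1 + int n) = tri (int n) + int n" using tri_succ[of "int n"] by (simp add: add.commute)
    have "g (Suc n) = \<rho> powi (tri (int n) + int n) * a powi (int n + 1)"
      unfolding g_def using t by (simp add: add.commute)
    also have "\<dots> = g n * (\<rho> ^ n * a)"
      using assms unfolding g_def by (simp add: power_int_add)
    finally show ?thesis .
  qed
  have "(\<lambda>n. \<rho> ^ n * a) \<longlonglongrightarrow> 0 * a"
    using assms by (intro tendsto_mult LIMSEQ_power_zero) auto
  then have "eventually (\<lambda>n. \<rho> ^ n * a < 1/2) sequentially"
    by (intro order_tendstoD(2)) auto
  then obtain N where N: "\<And>n. n \<ge> N \<Longrightarrow> \<rho> ^ n * a \<le> 1/2"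
    unfolding eventually_sequentially by (meson less_imp_le)
  have "summable g"
  proof (rule summable_ratio_test[of "1/2" N])
    fix n assume "n \<ge> N"
    have "g n \<ge> 0" using assms by (simp add: g_def)
    have "0 \<le> \<rho> ^ n * a" using assms by simp
    then have "norm (g (Suc n)) = g n * (\<rho> ^ n * a)" using \<open>g n \<ge> 0\<close>
      unfolding gS real_norm_def using assms by (intro abs_of_nonneg mult_nonneg_nonneg) auto
    also have "\<dots> \<le> g n * (1/2)" using N[OF \<open>n \<ge> N\<close>] \<open>g n \<ge> 0\<close> by (rule mult_left_mono)
    finally show "norm (g (Suc n)) \<le> 1/2 * norm (g n)" using \<open>g n \<ge> 0\<close> by simp
  qed auto
  moreover have "norm (\<rho> powi tri (int n) * a powi (int n)) = g n" for n
    using assms by (simp add: g_def abs_mult)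
  ultimately show "summable (\<lambda>n. norm (\<rho> powi tri (int n) * a powi (int n)))"
    by simp
next
  define g where "g n = \<rho> powi tri (- int n - 1) * a powi (- int n - 1)" for n :: nat
  have gS: "g (Suc n) = g n * (\<rho> ^ (n+2) / a)" for n
  proof -
    have e: "- int (Suc n) - 1 = (- int n - 1) - 1" by simp
    have "g (Suc n) = \<rho> powi (tri (- int n - 1) + (int n + 2)) * a powi ((- int n - 1) + (-1))"
      unfolding g_def e tri_pred by (simp add: algebra_simps)
    also have "\<dots> = (\<rho> powi tri (- int n - 1) * \<rho> powi (int (n+2))) * (a powi (- int n - 1) * a powi (-1))"
    proof -
      have 1: "a powi ((- int n - 1) + (-1)) = a powi (- int n - 1) * a powi (-1)"
        by (rule power_int_add) (use assms in auto)
      have 2: "\<rho> powi (tri (- int n - 1) + (int n + 2)) = \<rho> powi tri (- int n - 1) * \<rho> powi (int (n+2))"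
        using assms by (simp add: power_int_add)
      show ?thesis by (simp only: 1 2)
    qed
    also have "\<dots> = g n * (\<rho> ^ (n+2) / a)"
      unfolding g_def power_int_of_nat by (simp add: power_int_minus divide_inverse)
    finally show ?thesis .
  qed
  have "(\<lambda>n. \<rho> ^ n * (\<rho>^2 / a)) \<longlonglongrightarrow> 0 * (\<rho>^2/a)"
    using assms by (intro tendsto_mult LIMSEQ_power_zero) auto
  then have "eventually (\<lambda>n. \<rho> ^ n * (\<rho>^2/a) < 1/2) sequentially"
    by (intro order_tendstoD(2)) auto
  then obtain N where N: "\<And>n. n \<ge> N \<Longrightarrow> \<rho> ^ n * (\<rho>^2/a) \<le> 1/2"
    unfolding eventually_sequentially by (meson less_imp_le)
  have "summable g"
  proof (rule summable_ratio_test[of "1/2" N])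
    fix n assume "n \<ge> N"
    have "g n \<ge> 0" using assms by (simp add: g_def)
    moreover have "\<rho> ^ (n+2) / a = \<rho> ^ n * (\<rho>^2/a)" by (simp add: power_add power2_eq_square)
    moreover have "0 \<le> \<rho> ^ (n+2) / a" using assms by simp
    ultimately have "norm (g (Suc n)) = g n * (\<rho> ^ n * (\<rho>^2/a))" using \<open>g n \<ge> 0\<close>
      unfolding gS real_norm_def by (metis abs_of_nonneg mult_nonneg_nonneg)
    also have "\<dots> \<le> g n * (1/2)" using N[OF \<open>n \<ge> N\<close>] \<open>g n \<ge> 0\<close> by (rule mult_left_mono)
    finally show "norm (g (Suc n)) \<le> 1/2 * norm (g n)" using \<open>g n \<ge> 0\<close> by simp
  qed auto
  moreover have "norm (\<rho> powi tri (- int n - 1) * a powi (- int n - 1)) = g n" for n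
    using assms by (simp add: g_def abs_mult)
  ultimately show "summable (\<lambda>n. norm (\<rho> powi tri (- int n - 1) * a powi (- int n - 1)))"
    by simp
qed


lemma geo_disc:
  fixes p c x :: complex
  assumes p: "0 < norm p" "norm p < 1" and c: "c \<noteq> 0" and x: "x \<noteq> 0"
  shows "\<exists>e>0. \<forall>y. y \<noteq> x \<and> dist y x < e \<longrightarrow> y \<notin> range (\<lambda>k::int. c * p powi k)"
proof -
  define \<rho> where "\<rho> = norm p"
  have \<rho>: "0 < \<rho>" "\<rho> < 1" using p by (auto simp: \<rho>_def)
  have lim: "(\<lambda>n. \<rho> ^ n) \<longlonglongrightarrow> 0" using \<rho> by (intro LIMSEQ_power_zero) auto
  have "eventually (\<lambda>n. norm c * \<rho> ^ n < norm x / 2) sequentially"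
    using tendsto_mult[OF tendsto_const lim, of "norm c"] x by (intro order_tendstoD(2)) auto
  then obtain N1 where N1: "\<And>n. n \<ge> N1 \<Longrightarrow> norm c * \<rho> ^ n < norm x / 2"
    unfolding eventually_sequentially by blast
  have "eventually (\<lambda>n. 2 * norm x * \<rho> ^ n < norm c) sequentially"
    using tendsto_mult[OF tendsto_const lim, of "2 * norm x"] c by (intro order_tendstoD(2)) auto
  then obtain N2 where N2: "\<And>n. n \<ge> N2 \<Longrightarrow> 2 * norm x * \<rho> ^ n < norm c"
    unfolding eventually_sequentially by blast
  define A where "A = (\<lambda>k. c * p powi k) ` {- int N2 .. int N1}"
  have "finite A" unfolding A_def by simp
  from finite_set_avoid[OF this, of x] obtain d where d: "d > 0" "\<And>a. a \<in> A \<Longrightarrow> a \<noteq> x \<Longrightarrow> d \<le> dist x a"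
    by blast
  define e where "e = min d (norm x / 2)"
  have "e > 0" using d x by (simp add: e_def)
  moreover have "y \<notin> range (\<lambda>k::int. c * p powi k)" if y: "y \<noteq> x" "dist y x < e" for y
  proof
    assume "y \<in> range (\<lambda>k::int. c * p powi k)"
    then obtain k where k: "y = c * p powi k" by blast
    have ny: "norm y = norm c * \<rho> powi k" by (simp add: k norm_mult norm_power_int \<rho>_def)
    have yl: "norm y > norm x / 2"
    proof -
      have "norm x \<le> norm y + dist y x" by (metis dist_norm norm_triangle_sub norm_minus_commute dist_commute)
      then show ?thesis using y(2) by (simp add: e_def)
    qed
    have yu: "norm y < 2 * norm x"
    proof -
      have "norm y \<le> norm x + dist y x" by (metis dist_norm norm_triangle_sub)
      moreover have "norm x > 0" using x by simp
      moreover have "dist y x < norm x / 2" using y(2) by (simp add: e_def)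
      ultimately show ?thesis by linarith
    qed
    have k1: "k \<le> int N1"
    proof (rule ccontr)
      assume "\<not> k \<le> int N1"
      then have "\<rho> powi k \<le> \<rho> powi (int N1)" using \<rho> by (intro power_int_decreasing) auto
      then have "norm c * \<rho> powi k \<le> norm c * \<rho> ^ N1" by (simp add: mult_left_mono)
      then show False using N1[of N1] ny yl by simp
    qed
    have k2: "k \<ge> - int N2"
    proof (rule ccontr)
      assume "\<not> k \<ge> - int N2"
      then have "\<rho> powi (- int N2) \<le> \<rho> powi k" using \<rho> by (intro power_int_decreasing) auto
      then have "norm c * inverse (\<rho> ^ N2) \<le> norm c * \<rho> powi k"
        by (simp add: mult_left_mono power_int_minus)
      moreover have "2 * norm x * \<rho> ^ N2 < norm c" using N2[of N2] by simp
      then have "2 * norm x < norm c * inverse (\<rho> ^ N2)" using \<rho> by (simp add: field_simps)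
      ultimately show False using ny yu by simp
    qed
    have "y \<in> A" unfolding A_def using k k1 k2 by auto
    then have "d \<le> dist x y" using d(2) y(1) by auto
    then show False using y(2) by (simp add: e_def dist_commute)
  qed
  ultimately show ?thesis by blast
qed


lemma qp_cp: assumes "norm (p::complex) < 1" shows "convergent_prod (\<lambda>n. 1 - a * p^n)"
proof (intro abs_convergent_prod_imp_convergent_prod summable_imp_abs_convergent_prod)
  have "summable (\<lambda>n. norm a * norm p ^ n)" using assms by (intro summable_mult summable_geometric) auto
  then show "summable (\<lambda>n. norm (1 - a * p ^ n - 1))" by (simp add: norm_mult norm_power)
qed

lemma qp_lim: assumes "norm (p::complex) < 1" shows "(\<lambda>N. \<Prod>n<N. (1 - a * p^n)) \<longlonglongrightarrow> qpoch a p"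
  unfolding qpoch_def using convergent_prod_LIMSEQ[OF qp_cp[OF assms]] LIMSEQ_lessThan_iff_atMost by blast

lemma qp_shift: assumes "norm (p::complex) < 1" shows "qpoch a p = (1 - a) * qpoch (a*p) p"
proof -
  have "(\<lambda>N. \<Prod>n<Suc N. (1 - a * p^n)) \<longlonglongrightarrow> qpoch a p"
    using qp_lim[OF assms] by (rule LIMSEQ_Suc)
  moreover have "(\<Prod>n<Suc N. (1 - a * p^n)) = (1 - a) * (\<Prod>n<N. (1 - (a*p) * p^n))" for N
    by (subst prod.lessThan_Suc_shift) (simp add: mult.assoc)
  moreover have "(\<lambda>N. (1 - a) * (\<Prod>n<N. (1 - (a*p) * p^n))) \<longlonglongrightarrow> (1 - a) * qpoch (a*p) p"
    by (intro tendsto_mult tendsto_const qp_lim assms)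
  ultimately show ?thesis using LIMSEQ_unique by fastforce
qed

lemma qp_nonzero: assumes "norm (p::complex) < 1" "\<And>n. a * p^n \<noteq> 1" shows "qpoch a p \<noteq> 0"
  unfolding qpoch_def using assms by (intro prodinf_nonzero qp_cp) auto

lemma qp_one: assumes "norm (p::complex) < 1" shows "qpoch 1 p = 0"
  using qp_shift[OF assms, of 1] by simp

lemma qp_split3:
  assumes "norm (p::complex) < 1"
  shows "qpoch a p = qpoch a (p^3) * qpoch (a*p) (p^3) * qpoch (a*p^2) (p^3)"
proof -
  have p3: "norm (p^3) < 1" using assms by (simp add: norm_power power_less_one_iff)
  have eq: "(\<Prod>n<3*N. (1 - a * p^n)) = (\<Prod>k<N. (1 - a * (p^3)^k)) * (\<Prod>k<N. (1 - (a*p) * (p^3)^k)) * (\<Prod>k<N. (1 - (a*p^2) * (p^3)^k))" for N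
  proof (induction N)
    case (Suc N)
    have e: "3 * Suc N = Suc (Suc (Suc (3*N)))" by simp
    have pw: "p ^ (3*N) = (p^3)^N" "p ^ Suc (3*N) = p * (p^3)^N" "p ^ Suc (Suc (3*N)) = p^2 * (p^3)^N"
      by (simp_all add: power_mult power2_eq_square)
    show ?case unfolding e prod.lessThan_Suc Suc.IH pw by (simp only: ac_simps)
  qed simp
  have "(\<lambda>N. \<Prod>n<3*N. (1 - a * p^n)) \<longlonglongrightarrow> qpoch a p"
    using LIMSEQ_subseq_LIMSEQ[OF qp_lim[OF assms], of "\<lambda>N. 3*N"] by (simp add: strict_mono_def o_def)
  moreover have "(\<lambda>N. (\<Prod>k<N. (1 - a * (p^3)^k)) * (\<Prod>k<N. (1 - (a*p) * (p^3)^k)) * (\<Prod>k<N. (1 - (a*p^2) * (p^3)^k)))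
     \<longlonglongrightarrow> qpoch a (p^3) * qpoch (a*p) (p^3) * qpoch (a*p^2) (p^3)"
    by (intro tendsto_mult qp_lim p3)
  ultimately show ?thesis unfolding eq using LIMSEQ_unique by blast
qed

lemma qp_holo: assumes "norm (p::complex) < 1" shows "(\<lambda>a. qpoch a p) holomorphic_on UNIV"
proof (rule holomorphic_uniform_sequence[where f = "\<lambda>N a. \<Prod>n<N. (1 - a * p^n)"])
  fix x :: complex
  have uc: "uniformly_convergent_on (cball x 1) (\<lambda>N a. \<Prod>n<N. (1 - a * p^n))"
  proof (rule uniformly_convergent_on_prod')
    show "uniformly_convergent_on (cball x 1) (\<lambda>N a. \<Sum>n<N. norm (1 - a * p ^ n - 1))"
    proof (rule Weierstrass_m_test'[where M = "\<lambda>n. (norm x + 1) * norm p ^ n"])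
      fix n a assume "a \<in> cball x 1"
      then have "norm a \<le> norm x + 1" by (metis dist_norm mem_cball norm_triangle_sub add.commute dist_commute
            order_trans add_left_mono norm_minus_commute)
      then show "norm (norm (1 - a * p ^ n - 1)) \<le> (norm x + 1) * norm p ^ n"
        by (simp add: norm_mult norm_power mult_right_mono)
    next
      show "summable (\<lambda>n. (norm x + 1) * norm p ^ n)" using assms by (intro summable_mult summable_geometric) auto
    qed
  qed (auto intro!: continuous_intros)
  have "uniform_limit (cball x 1) (\<lambda>N a. \<Prod>n<N. (1 - a * p^n)) (\<lambda>a. qpoch a p) sequentially"
    using uc unfolding uniformly_convergent_uniform_limit_iff
    by (rule uniform_limit_cong'[THEN iffD1, rotated -1]) (auto intro!: limI qp_lim assms)
  then show "\<exists>d>0. cball x d \<subseteq> UNIV \<and> uniform_limit (cball x d) (\<lambda>N a. \<Prod>n<N. (1 - a * p^n)) (\<lambda>a. qpoch a p) sequentially"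
    by (intro exI[of _ 1]) auto
qed (auto intro!: holomorphic_intros)


definition jE :: "complex \<Rightarrow> complex \<Rightarrow> complex" where
  "jE y p = qpoch (y*p) p * qpoch (p/y) p * qpoch p p"

lemma jt_E: assumes "norm p < 1" shows "jtheta y p = (1 - y) * jE y p"
  unfolding jtheta_def jE_def using qp_shift[OF assms, of y] by simp

lemma jE_1: "jE 1 p = qpoch p p ^ 3"
  by (simp add: jE_def power3_eq_cube)

lemma jt_shift: assumes "norm p < 1" "p \<noteq> 0" "y \<noteq> 0" shows "jtheta (p*y) p = - jtheta y p / y"
proof -
  have "jtheta (p*y) p = qpoch (y*p) p * qpoch (1/y) p * qpoch p p"
    unfolding jtheta_def using assms by (simp add: mult.commute)
  also have "qpoch (1/y) p = (1 - 1/y) * qpoch (p/y) p" using qp_shift[OF assms(1), of "1/y"] by simp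
  finally show ?thesis unfolding jt_E[OF assms(1)] jE_def using assms(3) by (simp add: field_simps)
qed

lemma jt_sym: assumes "p \<noteq> 0" "y \<noteq> 0" shows "jtheta (p/y) p = jtheta y p"
  unfolding jtheta_def using assms by simp

lemma jt_inv: assumes "norm p < 1" "p \<noteq> 0" "y \<noteq> 0" shows "jtheta (1/y) p = - jtheta y p / y"
proof -
  have "jtheta (p*(1/y)) p = - jtheta (1/y) p / (1/y)" using jt_shift[OF assms(1,2), of "1/y"] assms by simp
  then have "jtheta y p = - jtheta (1/y) p * y" using jt_sym[OF assms(2,3)] by simp
  then show ?thesis using assms(3) by (simp add: field_simps)
qed

lemma jt_nonzero: assumes "norm p < 1" "p \<noteq> 0" "y \<noteq> 0" "\<And>k::int. y \<noteq> p powi k" shows "jtheta y p \<noteq> 0"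
proof -
  have "qpoch y p \<noteq> 0"
  proof (rule qp_nonzero[OF assms(1)])
    fix n
    show "y * p^n \<noteq> 1"
    proof
      assume "y * p^n = 1"
      then have "y = p powi (- int n)" using assms(2) by (simp add: power_int_minus field_simps)
      then show False using assms(4) by blast
    qed
  qed
  moreover have "qpoch (p/y) p \<noteq> 0"
  proof (rule qp_nonzero[OF assms(1)])
    fix n
    show "p/y * p^n \<noteq> 1"
    proof
      assume "p/y * p^n = 1"
      then have "y = p ^ Suc n" using assms(3) by (simp add: field_simps)
      then have "y = p powi (int (Suc n))" by (simp only: power_int_of_nat)
      then show False using assms(4) by blast
    qed
  qed
  moreover have "qpoch p p \<noteq> 0"
  proof (rule qp_nonzero[OF assms(1)])
    fix n
    have "norm (p * p^n) = norm p ^ Suc n" by (simp add: norm_mult norm_power)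
    also have "\<dots> < 1" using assms(1) by (simp only: power_less_one_iff norm_ge_zero) simp
    finally have "norm (p * p^n) < 1" .
    then show "p * p^n \<noteq> 1" by auto
  qed
  ultimately show ?thesis unfolding jtheta_def by simp
qed

lemma jt_holo: assumes "norm p < 1" shows "(\<lambda>y. jtheta y p) holomorphic_on (-{0})"
proof -
  have h: "(\<lambda>a. qpoch a p) holomorphic_on UNIV" by (rule qp_holo[OF assms])
  have hp: "(\<lambda>y. p/y) holomorphic_on (-{0})" by (auto intro!: holomorphic_intros)
  have "(\<lambda>y. qpoch (p/y) p) holomorphic_on (-{0})"
    using holomorphic_on_compose_gen[of "\<lambda>y. p/y" "-{0}" "\<lambda>a. qpoch a p" UNIV] h hp
    by (simp add: o_def)
  moreover have "(\<lambda>y. qpoch y p) holomorphic_on (-{0})" using h by (rule holomorphic_on_subset) auto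
  ultimately show ?thesis unfolding jtheta_def by (intro holomorphic_intros)
qed

lemma jE_holo: assumes "norm p < 1" shows "(\<lambda>y. jE y p) holomorphic_on (-{0})"
proof -
  have h: "(\<lambda>a. qpoch a p) holomorphic_on UNIV" by (rule qp_holo[OF assms])
  have hp: "(\<lambda>y. p/y) holomorphic_on (-{0})" by (auto intro!: holomorphic_intros)
  have "(\<lambda>y. qpoch (p/y) p) holomorphic_on (-{0})"
    using holomorphic_on_compose_gen[of "\<lambda>y. p/y" "-{0}" "\<lambda>a. qpoch a p" UNIV] h hp
    by (simp add: o_def)
  moreover have hp2: "(\<lambda>y. y*p) holomorphic_on (-{0})" by (auto intro!: holomorphic_intros)
  moreover have "(\<lambda>y. qpoch (y*p) p) holomorphic_on (-{0})"
    using holomorphic_on_compose_gen[of "\<lambda>y. y*p" "-{0}" "\<lambda>a. qpoch a p" UNIV] h hp2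
    by (simp add: o_def)
  ultimately show ?thesis unfolding jE_def by (intro holomorphic_intros)
qed

lemma jt_split3:
  assumes "norm q < 1" "q \<noteq> 0" "z \<noteq> 0"
  shows "jtheta z q = (qpoch q q / qpoch (q^3) (q^3) ^ 3) * (jtheta z (q^3) * jtheta (q*z) (q^3) * jtheta (q^2*z) (q^3))"
proof -
  have Q: "qpoch (q^3) (q^3) \<noteq> 0"
  proof (rule qp_nonzero)
    show "norm (q^3) < 1" using assms by (simp add: norm_power power_less_one_iff)
    fix n
    have "norm (q^3 * (q^3)^n) = norm q ^ (3 * Suc n)" by (simp add: norm_mult norm_power power_mult[symmetric] power_add[symmetric])
    also have "\<dots> < 1" using assms(1) by (simp add: power_less_one_iff)
    finally have "norm (q^3 * (q^3)^n) < 1" .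
    then show "q^3 * (q^3)^n \<noteq> 1" by auto
  qed
  have s1: "qpoch z q = qpoch z (q^3) * qpoch (z*q) (q^3) * qpoch (z*q^2) (q^3)" by (rule qp_split3[OF assms(1)])
  have s2: "qpoch (q/z) q = qpoch (q/z) (q^3) * qpoch (q/z*q) (q^3) * qpoch (q/z*q^2) (q^3)" by (rule qp_split3[OF assms(1)])
  have e1: "q^3/z = q/z*q^2" "q^3/(q*z) = q/z*q" "q^3/(q^2*z) = q/z"
    using assms by (simp_all add: field_simps power2_eq_square power3_eq_cube)
  show ?thesis unfolding jtheta_def s1 s2 e1 using Q by (simp add: field_simps power3_eq_cube)
qed


lemma holo_local:
  assumes "open S" "\<And>x. x \<in> S \<Longrightarrow> \<exists>e>0. f holomorphic_on ball x e"
  shows "f holomorphic_on S"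
  unfolding holomorphic_on_def
proof
  fix x assume "x \<in> S"
  then obtain e where "e > 0" "f holomorphic_on ball x e" using assms(2) by blast
  then have "f field_differentiable at x"
    using holomorphic_on_imp_differentiable_at by (metis centre_in_ball open_ball)
  then show "f field_differentiable at x within S" using field_differentiable_at_within by blast
qed

lemma infsum_holo:
  fixes f :: "'a \<Rightarrow> complex \<Rightarrow> complex"
  assumes b: "\<And>x y. x \<in> X \<Longrightarrow> y \<in> cball z0 e \<Longrightarrow> norm (f x y) \<le> M x"
    and M: "M summable_on X"
    and h: "\<And>x. x \<in> X \<Longrightarrow> f x holomorphic_on cball z0 e"
  shows "(\<lambda>y. \<Sum>\<^sub>\<infinity>x\<in>X. f x y) holomorphic_on ball z0 e"
proof -
  have ul: "uniform_limit (cball z0 e) (\<lambda>X' y. \<Sum>x\<in>X'. f x y) (\<lambda>y. \<Sum>\<^sub>\<infinity>x\<in>X. f x y) (finite_subsets_at_top X)"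
    by (rule Weierstrass_m_test_general[OF b M])
  have ev: "eventually (\<lambda>X'. continuous_on (cball z0 e) (\<lambda>y. \<Sum>x\<in>X'. f x y) \<and> (\<lambda>y. \<Sum>x\<in>X'. f x y) holomorphic_on ball z0 e) (finite_subsets_at_top X)"
  proof (rule eventually_finite_subsets_at_top_weakI)
    fix X' assume "finite X'" "X' \<subseteq> X"
    then have hh: "(\<lambda>y. \<Sum>x\<in>X'. f x y) holomorphic_on cball z0 e" using h by (intro holomorphic_on_sum) auto
    then show "continuous_on (cball z0 e) (\<lambda>y. \<Sum>x\<in>X'. f x y) \<and> (\<lambda>y. \<Sum>x\<in>X'. f x y) holomorphic_on ball z0 e"
      by (meson ball_subset_cball holomorphic_on_imp_continuous_on holomorphic_on_subset)
  qed
  show ?thesis using holomorphic_uniform_limit[OF ev ul] finite_subsets_at_top_neq_bot by blast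
qed

definition thterm :: "complex \<Rightarrow> complex \<Rightarrow> int \<Rightarrow> complex" where
  "thterm p z r = (-1) powi r * p powi tri r * z powi r"

definition thsum :: "complex \<Rightarrow> complex \<Rightarrow> complex" where
  "thsum z p = (\<Sum>\<^sub>\<infinity>r\<in>UNIV. thterm p z r)"

lemma norm_thterm: "norm (thterm p z r) = norm p powi tri r * norm z powi r"
  by (simp add: thterm_def norm_mult norm_power_int)

lemma th_abs_summable:
  assumes "0 < norm p" "norm p < 1" "z \<noteq> 0"
  shows "(\<lambda>r. norm (thterm p z r)) summable_on UNIV"
  unfolding norm_thterm using assms by (intro weight_summable) auto

lemma th_summable:
  assumes "0 < norm p" "norm p < 1" "z \<noteq> 0"
  shows "thterm p z summable_on A"
  using abs_summable_summable[OF th_abs_summable[OF assms]] summable_on_subset_banach by blast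

lemma th_holo:
  assumes p: "0 < norm p" "norm p < 1"
  shows "(\<lambda>z. thsum z p) holomorphic_on (-{0})"
proof (rule holo_local)
  fix z0 :: complex assume "z0 \<in> - {0}"
  then have z0: "z0 \<noteq> 0" by auto
  define e where "e = norm z0 / 2"
  define b1 where "b1 = 3 * norm z0 / 2"
  define b2 where "b2 = norm z0 / 2"
  have e: "e > 0" "b2 > 0" "b1 > 0" using z0 by (auto simp: e_def b1_def b2_def)
  have nb: "b2 \<le> norm y \<and> norm y \<le> b1" if "y \<in> cball z0 e" for y
  proof -
    have "dist z0 y \<le> e" using that by simp
    then have "norm (z0 - y) \<le> norm z0 / 2" by (simp add: dist_norm e_def)
    moreover have "norm z0 \<le> norm y + norm (z0 - y)" "norm y \<le> norm z0 + norm (z0 - y)"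
      using norm_triangle_ineq[of y "z0 - y"] norm_triangle_ineq[of z0 "y - z0"]
      by (simp_all add: norm_minus_commute)
    ultimately show ?thesis by (simp add: b1_def b2_def)
  qed
  define M where "M r = norm p powi tri r * (b1 powi r + b2 powi r)" for r
  have "(\<lambda>y. \<Sum>\<^sub>\<infinity>r\<in>UNIV. thterm p y r) holomorphic_on ball z0 e"
  proof (rule infsum_holo[where M = M])
    fix r y assume "y \<in> cball z0 e"
    then have y: "b2 \<le> norm y" "norm y \<le> b1" using nb by auto
    have "norm y powi r \<le> b1 powi r + b2 powi r"
    proof (cases "r \<ge> 0")
      case True
      then have "norm y powi r \<le> b1 powi r" using y by (intro power_int_mono) auto
      moreover have "0 \<le> b2 powi r" using e by simp
      ultimately show ?thesis by linarith
    next
      case False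
      then have "norm y powi r \<le> b2 powi r" using y e by (intro power_int_antimono) auto
      moreover have "0 \<le> b1 powi r" using e by simp
      ultimately show ?thesis by linarith
    qed
    then show "norm (thterm p y r) \<le> M r" unfolding norm_thterm M_def
      by (intro mult_left_mono) auto
  next
    have "(\<lambda>r. norm p powi tri r * b1 powi r + norm p powi tri r * b2 powi r) summable_on UNIV"
      using p e by (intro summable_on_add weight_summable) auto
    then show "M summable_on UNIV" unfolding M_def by (simp add: distrib_left)
  next
    fix r :: int
    have "0 \<notin> cball z0 e" using nb[of 0] e by auto
    then have "(\<lambda>y. y powi r) holomorphic_on cball z0 e"
      by (intro holomorphic_on_power_int) (auto intro: holomorphic_intros)
    then show "(\<lambda>y. thterm p y r) holomorphic_on cball z0 e" unfolding thterm_def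
      by (intro holomorphic_on_mult holomorphic_on_const)
  qed
  then show "\<exists>e>0. (\<lambda>z. thsum z p) holomorphic_on ball z0 e" using e unfolding thsum_def by blast
qed (intro open_Compl closed_singleton)

lemma neg1_pm: "(-1::complex) powi (r - 1) = - ((-1) powi r)"
  by (simp add: power_int_diff)

lemma neg1_refl: "(-1::complex) powi (1 - r) = - ((-1) powi r)"
proof -
  have sq: "(-1::complex) powi r * (-1) powi r = 1"
    by (simp add: power_int_mult_distrib[symmetric])
  have "(-1::complex) powi (1 - r) = -1 / (-1) powi r" by (simp add: power_int_diff)
  also have "\<dots> = - ((-1) powi r)" using sq by (simp add: field_simps)
  finally show ?thesis .
qed

lemma bij_pred: "bij_betw (\<lambda>s::int. s - 1) UNIV UNIV"
  by (rule bij_betwI[where g="\<lambda>s. s+1"]) auto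

lemma bij_succ: "bij_betw (\<lambda>s::int. s + 1) UNIV UNIV"
  by (rule bij_betwI[where g="\<lambda>s. s-1"]) auto

lemma bij_refl: "bij_betw (\<lambda>s::int. 1 - s) UNIV UNIV"
  by (rule bij_betwI[where g="\<lambda>s. 1 - s"]) auto

lemma th_shift:
  assumes p: "0 < norm p" "norm p < 1" and z: "z \<noteq> 0"
  shows "thsum (p*z) p = - thsum z p / z"
proof -
  have p0: "p \<noteq> 0" using p by auto
  have key: "thterm p (p*z) (s - 1) = (-1/z) * thterm p z s" for s
  proof -
    have "p powi tri (s-1) * p powi (s-1) = p powi (tri (s-1) + (s-1))" using p0 by (simp add: power_int_add)
    also have "tri (s-1) + (s-1) = tri s" using tri_pred[of s] by simp
    finally have a: "p powi tri (s-1) * p powi (s-1) = p powi tri s" .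
    have b: "z powi (s-1) = z powi s / z" using z by (simp add: power_int_diff)
    have "thterm p (p*z) (s - 1) = - ((-1) powi s) * (p powi tri (s-1) * p powi (s-1)) * z powi (s-1)"
      unfolding thterm_def neg1_pm power_int_mult_distrib by (simp only: ac_simps)
    also have "\<dots> = (-1/z) * thterm p z s" unfolding a b thterm_def by (simp add: field_simps)
    finally show ?thesis .
  qed
  have "thsum (p*z) p = (\<Sum>\<^sub>\<infinity>s\<in>UNIV. thterm p (p*z) (s - 1))"
    unfolding thsum_def by (rule infsum_reindex_bij_betw[OF bij_pred, symmetric])
  also have "\<dots> = (\<Sum>\<^sub>\<infinity>s\<in>UNIV. (-1/z) * thterm p z s)" unfolding key ..
  also have "\<dots> = (-1/z) * thsum z p" unfolding thsum_def by (rule infsum_cmult_right) (use th_summable[OF p z] in blast)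
  finally show ?thesis by simp
qed

lemma th_one:
  assumes p: "0 < norm p" "norm p < 1"
  shows "thsum 1 p = 0"
proof -
  have key: "thterm p 1 (1 - r) = - thterm p 1 r" for r
    unfolding thterm_def neg1_refl tri_refl by simp
  have "thsum 1 p = (\<Sum>\<^sub>\<infinity>s\<in>UNIV. thterm p 1 (1 - s))"
    unfolding thsum_def by (rule infsum_reindex_bij_betw[OF bij_refl, symmetric])
  also have "\<dots> = - thsum 1 p" unfolding key thsum_def by (rule infsum_uminus)
  finally show ?thesis by simp
qed


definition hterm :: "complex \<Rightarrow> complex \<Rightarrow> complex \<Rightarrow> int \<Rightarrow> complex" where
  "hterm p x w r = (-1) powi r * p powi tri r * w powi r / (1 - p powi (r-1) * x * w)"

definition hsum :: "complex \<Rightarrow> complex \<Rightarrow> complex \<Rightarrow> complex" where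
  "hsum x w p = (\<Sum>\<^sub>\<infinity>r\<in>UNIV. hterm p x w r)"

lemma appell_hsum: "appell_m x p w = hsum x w p / jtheta w p"
  unfolding appell_m_def hsum_def hterm_def pow_tri by simp

lemma hterm_th: "hterm p x w r = thterm p w r / (1 - p powi (r-1) * x * w)"
  by (simp add: hterm_def thterm_def)

lemma den_bound:
  fixes p w :: complex and \<delta> B :: real
  assumes p: "0 < norm p" "norm p < 1" and w: "w \<noteq> 0" and d: "0 < \<delta>"
  shows "\<exists>R::int. R \<ge> 0 \<and> (\<forall>r x. \<delta> \<le> norm x \<longrightarrow> norm x \<le> B \<longrightarrow> R \<le> \<bar>r\<bar> \<longrightarrow> 1/2 \<le> norm (1 - p powi (r-1) * x * w))"
proof -
  define \<rho> where "\<rho> = norm p"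
  have \<rho>: "0 < \<rho>" "\<rho> < 1" using p by (auto simp: \<rho>_def)
  have lim: "(\<lambda>n. \<rho> ^ n) \<longlonglongrightarrow> 0" using \<rho> by (intro LIMSEQ_power_zero) auto
  have t1: "(\<lambda>n. \<rho> ^ n * (B * norm w)) \<longlonglongrightarrow> 0 * (B * norm w)" by (intro tendsto_mult lim tendsto_const)
  have "eventually (\<lambda>n. \<rho> ^ n * (B * norm w) < 1/2) sequentially"
    by (rule order_tendstoD(2)[OF t1]) simp
  then obtain N1 where N1: "\<And>n. n \<ge> N1 \<Longrightarrow> \<rho> ^ n * (B * norm w) < 1/2"
    unfolding eventually_sequentially by blast
  have t2: "(\<lambda>n. \<rho> ^ n * 3) \<longlonglongrightarrow> 0 * 3" by (intro tendsto_mult lim tendsto_const)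
  have "eventually (\<lambda>n. \<rho> ^ n * 3 < 2 * \<delta> * norm w) sequentially"
    by (rule order_tendstoD(2)[OF t2]) (use d w in simp)
  then obtain N2 where N2: "\<And>n. n \<ge> N2 \<Longrightarrow> \<rho> ^ n * 3 < 2 * \<delta> * norm w"
    unfolding eventually_sequentially by blast
  define R where "R = int (N1 + N2) + 1"
  have "1/2 \<le> norm (1 - p powi (r-1) * x * w)" if x: "\<delta> \<le> norm x" "norm x \<le> B" and r: "R \<le> \<bar>r\<bar>" for r x
  proof -
    have na: "norm (p powi (r-1) * x * w) = \<rho> powi (r-1) * norm x * norm w"
      by (simp add: norm_mult norm_power_int \<rho>_def)
    show ?thesis
    proof (cases "r \<ge> 0")
      case True
      then have "r - 1 \<ge> int N1" using r by (simp add: R_def)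
      then have "\<rho> powi (r-1) \<le> \<rho> powi (int N1)" using \<rho> by (intro power_int_decreasing) auto
      then have "\<rho> powi (r-1) * (norm x * norm w) \<le> \<rho> ^ N1 * (B * norm w)"
        using x \<rho> d by (intro mult_mono) (auto intro: mult_right_mono)
      then have "norm (p powi (r-1) * x * w) \<le> 1/2" using N1[of N1] na by (simp add: mult.assoc)
      moreover have "1 - norm (p powi (r-1) * x * w) \<le> norm (1 - p powi (r-1) * x * w)"
        using norm_triangle_ineq2[of 1 "p powi (r-1) * x * w"] by simp
      ultimately show ?thesis by linarith
    next
      case False
      then have "1 - r \<ge> int N2" using r by (simp add: R_def)
      then have "\<rho> powi (1-r) \<le> \<rho> powi (int N2)" using \<rho> by (intro power_int_decreasing) auto
      then have "\<rho> powi (1-r) * 3 < 2 * \<delta> * norm w" using N2[of N2] by simp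
      moreover have "\<rho> powi (r-1) * \<rho> powi (1-r) = 1" using \<rho> by (simp add: power_int_add[symmetric])
      moreover have "0 < \<rho> powi (r-1)" using \<rho> by simp
      ultimately have "\<rho> powi (r-1) * (\<rho> powi (1-r) * 3) < \<rho> powi (r-1) * (2 * \<delta> * norm w)"
        by (intro mult_strict_left_mono) auto
      moreover have "\<rho> powi (r-1) * (\<rho> powi (1-r) * 3) = (\<rho> powi (r-1) * \<rho> powi (1-r)) * 3"
        by (rule mult.assoc[symmetric])
      ultimately have "3 < \<rho> powi (r-1) * (2 * \<delta> * norm w)"
        using \<open>\<rho> powi (r-1) * \<rho> powi (1-r) = 1\<close> by simp
      moreover have "\<rho> powi (r-1) * (\<delta> * norm w) \<le> \<rho> powi (r-1) * (norm x * norm w)"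
        using x \<rho> by (intro mult_left_mono mult_right_mono) auto
      ultimately have "3/2 \<le> norm (p powi (r-1) * x * w)" using na by (simp add: mult.assoc)
      moreover have "norm (p powi (r-1) * x * w) - 1 \<le> norm (1 - p powi (r-1) * x * w)"
        using norm_triangle_ineq2[of "p powi (r-1) * x * w" 1] by (simp add: norm_minus_commute)
      ultimately show ?thesis by linarith
    qed
  qed
  moreover have "R \<ge> 0" by (simp add: R_def)
  ultimately show ?thesis by blast
qed

lemma hterm_tail:
  assumes "1/2 \<le> norm (1 - p powi (r-1) * x * w)"
  shows "norm (hterm p x w r) \<le> 2 * norm (thterm p w r)"
proof -
  have pos: "0 < norm (1 - p powi (r-1) * x * w)" using assms by linarith
  have "norm (hterm p x w r) = norm (thterm p w r) / norm (1 - p powi (r-1) * x * w)"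
    by (simp add: hterm_th norm_divide)
  also have "\<dots> \<le> norm (thterm p w r) / (1/2)"
    using assms pos by (intro divide_left_mono) auto
  finally show ?thesis by simp
qed

lemma hsum_abs_summable:
  assumes p: "0 < norm p" "norm p < 1" and w: "w \<noteq> 0" and x: "x \<noteq> 0"
  shows "(\<lambda>r. norm (hterm p x w r)) summable_on UNIV"
proof -
  have nx: "0 < norm x" using x by simp
  from den_bound[OF p w nx, of "norm x"]
  obtain R where R: "R \<ge> 0" "\<forall>r y. norm x \<le> norm y \<longrightarrow> norm y \<le> norm x \<longrightarrow> R \<le> \<bar>r\<bar> \<longrightarrow> 1/2 \<le> norm (1 - p powi (r-1) * y * w)"
    by blast
  define T where "T = {r. R \<le> \<bar>r\<bar>}"
  define H where "H = {r. \<bar>r\<bar> < R}"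
  have "H \<subseteq> {-R..R}" unfolding H_def by (auto simp: abs_less_iff)
  then have "finite H" by (rule finite_subset) simp
  then have sH: "(\<lambda>r. norm (hterm p x w r)) summable_on H" by (rule summable_on_finite)
  have sT: "(\<lambda>r. norm (hterm p x w r)) summable_on T"
  proof (rule summable_on_comparison_test)
    have "(\<lambda>r. norm (thterm p w r)) summable_on T"
      using th_abs_summable[OF p w] by (rule summable_on_subset_banach) simp
    then show "(\<lambda>r. 2 * norm (thterm p w r)) summable_on T"
      by (rule summable_on_cmult_right)
    show "norm (hterm p x w r) \<le> 2 * norm (thterm p w r)" if "r \<in> T" for r
    proof (rule hterm_tail)
      have "R \<le> \<bar>r\<bar>" using that by (simp add: T_def)
      then show "1/2 \<le> norm (1 - p powi (r-1) * x * w)" using R(2) by blast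
    qed
    show "0 \<le> norm (hterm p x w r)" for r by simp
  qed
  have U: "H \<union> T = UNIV" by (auto simp: H_def T_def)
  have "(\<lambda>r. norm (hterm p x w r)) summable_on (H \<union> T)"
    by (rule summable_on_Un_disjoint[OF sH sT]) (auto simp: H_def T_def)
  then show ?thesis unfolding U .
qed

lemma hsum_summable:
  assumes p: "0 < norm p" "norm p < 1" and w: "w \<noteq> 0" and x: "x \<noteq> 0"
  shows "hterm p x w summable_on A"
  using abs_summable_summable[OF hsum_abs_summable[OF assms]] summable_on_subset_banach by blast


lemma hsum_holo_gen:
  assumes p: "0 < norm p" "norm p < 1" and w: "w \<noteq> 0" and x0: "x0 \<noteq> 0" and E: "finite E"
    and nz: "\<And>r. r \<notin> E \<Longrightarrow> 1 - p powi (r-1) * x0 * w \<noteq> 0"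
  shows "\<exists>e>0. (\<lambda>x. \<Sum>\<^sub>\<infinity>r\<in>UNIV - E. hterm p x w r) holomorphic_on ball x0 e"
proof -
  define e0 where "e0 = norm x0 / 2"
  have e0: "e0 > 0" using x0 by (simp add: e0_def)
  have nb: "norm x0 / 2 \<le> norm y \<and> norm y \<le> 3 * norm x0 / 2" if "y \<in> cball x0 e0" for y
  proof -
    have "norm (x0 - y) \<le> norm x0 / 2" using that by (simp add: dist_norm e0_def)
    moreover have "norm x0 \<le> norm y + norm (x0 - y)" "norm y \<le> norm x0 + norm (x0 - y)"
      using norm_triangle_ineq[of y "x0 - y"] norm_triangle_ineq[of x0 "y - x0"]
      by (simp_all add: norm_minus_commute)
    ultimately show ?thesis by simp
  qed
  have nx: "0 < norm x0 / 2" using x0 by simp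
  from den_bound[OF p w nx, of "3 * norm x0 / 2"]
  obtain R where R0: "R \<ge> 0" and R1: "\<forall>r y. norm x0 / 2 \<le> norm y \<longrightarrow> norm y \<le> 3 * norm x0 / 2 \<longrightarrow> R \<le> \<bar>r\<bar> \<longrightarrow> 1/2 \<le> norm (1 - p powi (r-1) * y * w)"
    by blast
  have R: "1/2 \<le> norm (1 - p powi (r-1) * y * w)" if "norm x0 / 2 \<le> norm y" "norm y \<le> 3 * norm x0 / 2" "R \<le> \<bar>r\<bar>" for r y
    using R1 that by blast
  define T where "T = {r. R \<le> \<bar>r\<bar>} - E"
  define H where "H = {r. \<bar>r\<bar> < R} - E"
  have "H \<subseteq> {-R..R}" unfolding H_def by (auto simp: abs_less_iff)
  then have fH: "finite H" by (rule finite_subset) simp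
  define Z where "Z = (\<lambda>r. 1 / (p powi (r-1) * w)) ` H"
  have "finite Z" using fH by (simp add: Z_def)
  from finite_set_avoid[OF this, of x0] obtain d where d: "d > 0" "\<And>z. z \<in> Z \<Longrightarrow> z \<noteq> x0 \<Longrightarrow> d \<le> dist x0 z"
    by blast
  have p0: "p \<noteq> 0" using p by auto
  have denZ: "x \<in> Z" if "r \<in> H" "1 - p powi (r-1) * x * w = 0" for r x
  proof -
    have "p powi (r-1) * w \<noteq> 0" using p0 w by simp
    then have "x = 1 / (p powi (r-1) * w)" using that(2) by (simp add: field_simps)
    then show ?thesis using that(1) unfolding Z_def by (rule image_eqI)
  qed
  have x0Z: "x0 \<notin> Z"
  proof
    assume "x0 \<in> Z"
    then obtain r where r: "r \<in> H" "x0 = 1 / (p powi (r-1) * w)" by (auto simp: Z_def)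
    then have "1 - p powi (r-1) * x0 * w = 0" using p0 w by simp
    moreover have "r \<notin> E" using r(1) by (simp add: H_def)
    ultimately show False using nz by blast
  qed
  define e where "e = min d e0"
  have e: "e > 0" using d e0 by (simp add: e_def)
  have denH: "1 - p powi (r-1) * x * w \<noteq> 0" if "r \<in> H" "x \<in> ball x0 e" for r x
  proof
    assume "1 - p powi (r-1) * x * w = 0"
    then have "x \<in> Z" using denZ that(1) by blast
    moreover have "x \<noteq> x0" using x0Z \<open>x \<in> Z\<close> by blast
    ultimately have "d \<le> dist x0 x" using d(2) by blast
    then show False using that(2) by (simp add: e_def)
  qed
  have holH: "(\<lambda>x. \<Sum>r\<in>H. hterm p x w r) holomorphic_on ball x0 e"
    unfolding hterm_def using denH by (intro holomorphic_on_sum holomorphic_intros) auto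
  have holT: "(\<lambda>x. \<Sum>\<^sub>\<infinity>r\<in>T. hterm p x w r) holomorphic_on ball x0 e0"
  proof (rule infsum_holo[where M = "\<lambda>r. 2 * norm (thterm p w r)"])
    fix r y assume "r \<in> T" "y \<in> cball x0 e0"
    then show "norm (hterm p y w r) \<le> 2 * norm (thterm p w r)"
    proof (intro hterm_tail R)
      show "R \<le> \<bar>r\<bar>" using \<open>r \<in> T\<close> by (simp add: T_def)
    qed (use nb[OF \<open>y \<in> cball x0 e0\<close>] in auto)
  next
    show "(\<lambda>r. 2 * norm (thterm p w r)) summable_on T"
    proof (rule summable_on_cmult_right)
      show "(\<lambda>r. norm (thterm p w r)) summable_on T"
        using th_abs_summable[OF p w] by (rule summable_on_subset_banach) simp
    qed
  next
    fix r assume "r \<in> T"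
    have "1 - p powi (r-1) * y * w \<noteq> 0" if "y \<in> cball x0 e0" for y
    proof -
      have "1/2 \<le> norm (1 - p powi (r-1) * y * w)"
      proof (rule R)
        show "R \<le> \<bar>r\<bar>" using \<open>r \<in> T\<close> by (simp add: T_def)
      qed (use nb[OF that] in auto)
      then show ?thesis by auto
    qed
    then show "(\<lambda>x. hterm p x w r) holomorphic_on cball x0 e0"
      unfolding hterm_def by (intro holomorphic_intros) auto
  qed
  have sub: "ball x0 e \<subseteq> ball x0 e0" by (rule subset_ball) (simp add: e_def)
  have hol: "(\<lambda>x. (\<Sum>r\<in>H. hterm p x w r) + (\<Sum>\<^sub>\<infinity>r\<in>T. hterm p x w r)) holomorphic_on ball x0 e"
    using holH holomorphic_on_subset[OF holT sub] by (intro holomorphic_on_add)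
  have eq: "(\<Sum>\<^sub>\<infinity>r\<in>UNIV - E. hterm p x w r) = (\<Sum>r\<in>H. hterm p x w r) + (\<Sum>\<^sub>\<infinity>r\<in>T. hterm p x w r)"
    if "x \<in> ball x0 e" for x
  proof -
    have "x \<in> cball x0 e0" using that sub by auto
    then have "norm x0 / 2 \<le> norm x" using nb by blast
    then have "x \<noteq> 0" using x0 by auto
    have U: "UNIV - E = H \<union> T" by (auto simp: H_def T_def)
    have "(\<Sum>\<^sub>\<infinity>r\<in>H \<union> T. hterm p x w r) = (\<Sum>\<^sub>\<infinity>r\<in>H. hterm p x w r) + (\<Sum>\<^sub>\<infinity>r\<in>T. hterm p x w r)"
      by (intro infsum_Un_disjoint hsum_summable p w \<open>x \<noteq> 0\<close>) (auto simp: H_def T_def)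
    then show ?thesis using fH U by simp
  qed
  have "(\<lambda>x. \<Sum>\<^sub>\<infinity>r\<in>UNIV - E. hterm p x w r) holomorphic_on ball x0 e"
    by (rule holomorphic_transform[OF hol]) (use eq in auto)
  then show ?thesis using e by blast
qed

lemma aux_frac: "(1::complex) - c \<noteq> 0 \<Longrightarrow> a / (1 - c) - a * c / (1 - c) = a"
proof -
  assume "1 - c \<noteq> 0"
  have "a / (1 - c) - a * c / (1 - c) = (a * (1 - c)) / (1 - c)"
    by (simp add: diff_divide_distrib right_diff_distrib)
  then show ?thesis using \<open>1 - c \<noteq> 0\<close> by simp
qed

lemma hsum_shift:
  assumes p: "0 < norm p" "norm p < 1" and w: "w \<noteq> 0" and x: "x \<noteq> 0"
    and nz: "\<And>r. 1 - p powi (r-1) * x * w \<noteq> 0"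
  shows "hsum (p*x) w p = thsum w p - x * hsum x w p"
proof -
  have p0: "p \<noteq> 0" using p by auto
  have key: "hterm p (p*x) w s + x * hterm p x w (s+1) = thterm p w s" for s
  proof -
    have d: "1 - p powi s * x * w \<noteq> 0" using nz[of "s+1"] by simp
    have e1: "p powi (s - 1) * (p * x) * w = p powi s * x * w"
      using power_int_minus_mult[of p s] p0 by (simp add: mult.assoc[symmetric])
    have e2: "p powi tri (s+1) = p powi tri s * p powi s" using p0 by (simp add: tri_succ power_int_add)
    have e3: "(-1::complex) powi (s+1) = - ((-1) powi s)" by (simp add: power_int_add)
    have e4: "w powi (s+1) = w powi s * w" using w by (simp add: power_int_add)
    have "hterm p (p*x) w s + x * hterm p x w (s+1)
        = thterm p w s / (1 - p powi s * x * w) - thterm p w s * (p powi s * x * w) / (1 - p powi s * x * w)"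
      unfolding hterm_def thterm_def e1 e2 e3 e4 by (simp add: field_simps)
    also have "\<dots> = thterm p w s" using d by (rule aux_frac)
    finally show ?thesis .
  qed
  have px: "p * x \<noteq> 0" using p0 x by simp
  have s1: "hterm p (p*x) w summable_on UNIV" by (rule hsum_summable[OF p w px])
  have s2: "(\<lambda>s. x * hterm p x w (s+1)) summable_on UNIV"
  proof (rule summable_on_cmult_right)
    show "(\<lambda>s. hterm p x w (s+1)) summable_on UNIV"
      using summable_on_reindex_bij_betw[OF bij_succ, of "hterm p x w"] hsum_summable[OF p w x] by simp
  qed
  have "x * hsum x w p = (\<Sum>\<^sub>\<infinity>s\<in>UNIV. x * hterm p x w (s+1))"
  proof -
    have "x * hsum x w p = (\<Sum>\<^sub>\<infinity>r\<in>UNIV. x * hterm p x w r)"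
      unfolding hsum_def by (rule infsum_cmult_right[symmetric]) (use hsum_summable[OF p w x] in blast)
    also have "\<dots> = (\<Sum>\<^sub>\<infinity>s\<in>UNIV. x * hterm p x w (s+1))"
      by (rule infsum_reindex_bij_betw[OF bij_succ, symmetric])
    finally show ?thesis .
  qed
  then have "hsum (p*x) w p + x * hsum x w p = (\<Sum>\<^sub>\<infinity>s\<in>UNIV. hterm p (p*x) w s + x * hterm p x w (s+1))"
    unfolding hsum_def using infsum_add[OF s1 s2] by simp
  also have "\<dots> = thsum w p" unfolding key thsum_def ..
  finally show ?thesis by (simp add: algebra_simps)
qed

lemma hsum_pole_split:
  assumes p: "0 < norm p" "norm p < 1" and w: "w \<noteq> 0" and x: "x \<noteq> 0"
  shows "hsum x w p = - w / (1 - x * w) + (\<Sum>\<^sub>\<infinity>r\<in>UNIV - {1}. hterm p x w r)"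
proof -
  have "hsum x w p = hterm p x w 1 + (\<Sum>\<^sub>\<infinity>r\<in>UNIV - {1}. hterm p x w r)"
  proof -
    have "(\<Sum>\<^sub>\<infinity>r\<in>insert 1 (UNIV - {1}). hterm p x w r) = hterm p x w 1 + (\<Sum>\<^sub>\<infinity>r\<in>UNIV - {1}. hterm p x w r)"
      by (rule infsum_insert) (use hsum_summable[OF p w x] in auto)
    moreover have "insert 1 (UNIV - {1}) = (UNIV :: int set)" by auto
    ultimately show ?thesis unfolding hsum_def by simp
  qed
  moreover have "hterm p x w 1 = - w / (1 - x * w)" by (simp add: hterm_def mult.commute)
  ultimately show ?thesis by simp
qed

lemma hsum_pole_holo:
  assumes p: "0 < norm p" "norm p < 1" and w: "w \<noteq> 0"
  shows "\<exists>e>0. (\<lambda>x. \<Sum>\<^sub>\<infinity>r\<in>UNIV - {1}. hterm p x w r) holomorphic_on ball (1/w) e"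
proof (rule hsum_holo_gen[OF p w])
  show "1/w \<noteq> 0" using w by simp
  fix r :: int assume "r \<notin> {1}"
  then have "r - 1 \<noteq> 0" by simp
  show "1 - p powi (r-1) * (1/w) * w \<noteq> 0"
  proof
    assume "1 - p powi (r-1) * (1/w) * w = 0"
    then have "p powi (r-1) = 1" using w by (simp add: field_simps)
    then have "norm p powi (r-1) = 1" by (metis norm_one norm_power_int)
    moreover have "norm p powi (r-1) \<noteq> 1"
    proof (cases "r - 1 > 0")
      case True
      then have "norm p powi (r-1) < norm p powi 0" using p by (intro power_int_strict_decreasing) auto
      then show ?thesis by simp
    next
      case False
      then have "r - 1 < 0" using \<open>r - 1 \<noteq> 0\<close> by simp
      then have "norm p powi 0 < norm p powi (r-1)" using p by (intro power_int_strict_decreasing) auto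
      then show ?thesis by simp
    qed
    ultimately show False by blast
  qed
qed simp


lemma annulus_index:
  fixes \<rho> t :: real
  assumes "0 < \<rho>" "\<rho> < 1" "0 < t"
  shows "\<exists>k::int. \<rho> powi (k+1) < t \<and> t \<le> \<rho> powi k"
proof -
  have l: "ln \<rho> < 0" using assms by simp
  define L where "L = ln t / ln \<rho>"
  define k where "k = \<lfloor>L\<rfloor>"
  have k1: "of_int k \<le> L" "L < of_int k + 1" unfolding k_def by linarith+
  have lnp: "ln (\<rho> powi m) = of_int m * ln \<rho>" for m
  proof -
    have "\<rho> powi m = \<rho> powr (of_int m)" using assms by (simp add: powr_real_of_int')
    then show ?thesis using assms by simp
  qed
  have Lt: "L * ln \<rho> = ln t" unfolding L_def using l by simp
  have "of_int k * ln \<rho> \<ge> L * ln \<rho>" using k1(1) l by (intro mult_right_mono_neg) auto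
  then have "ln t \<le> ln (\<rho> powi k)" using Lt lnp by simp
  then have a: "t \<le> \<rho> powi k" using assms by simp
  have "(of_int k + 1) * ln \<rho> < L * ln \<rho>" using k1(2) l by (intro mult_strict_right_mono_neg) auto
  then have "ln (\<rho> powi (k+1)) < ln t" using Lt lnp[of "k+1"] by simp
  then have b: "\<rho> powi (k+1) < t" using assms by simp
  show ?thesis using a b by blast
qed

locale ellctx =
  fixes p :: complex and \<Phi> \<mu> :: "complex \<Rightarrow> complex" and P :: "complex set"
  assumes p: "0 < norm p" "norm p < 1"
    and P0: "0 \<notin> P"
    and Pshift: "\<And>x. x \<noteq> 0 \<Longrightarrow> p * x \<in> P \<longleftrightarrow> x \<in> P"
    and Pdisc: "\<And>x. x \<noteq> 0 \<Longrightarrow> \<exists>e>0. \<forall>y. y \<noteq> x \<and> dist y x < e \<longrightarrow> y \<notin> P"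
    and hol: "\<And>x. x \<noteq> 0 \<Longrightarrow> x \<notin> P \<Longrightarrow> \<Phi> field_differentiable (at x)"
    and feq: "\<And>x. x \<noteq> 0 \<Longrightarrow> x \<notin> P \<Longrightarrow> \<Phi> (p * x) = \<mu> x * \<Phi> x"
    and \<mu>c: "\<And>x. x \<noteq> 0 \<Longrightarrow> isCont \<mu> x"
    and \<mu>nz: "\<And>x. x \<noteq> 0 \<Longrightarrow> \<mu> x \<noteq> 0"
    and \<mu>1: "\<And>x. x \<noteq> 0 \<Longrightarrow> norm x \<le> 1 \<Longrightarrow> norm (\<mu> x) \<le> 1"
    and \<mu>2: "\<And>x. 1 \<le> norm x \<Longrightarrow> 1 \<le> norm (\<mu> x)"
    and lim: "\<And>s. s \<in> P \<Longrightarrow> \<exists>k::int. \<exists>c. (\<Phi> \<longlongrightarrow> c) (at (p powi k * s))"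
begin

lemma p0: "p \<noteq> 0" using p by auto

lemma ev_notP:
  assumes "t \<noteq> 0" shows "eventually (\<lambda>y. y \<noteq> 0 \<and> y \<notin> P) (at t)"
proof -
  obtain e where e: "e > 0" "\<And>y. y \<noteq> t \<Longrightarrow> dist y t < e \<Longrightarrow> y \<notin> P" using Pdisc[OF assms] by blast
  have "\<forall>y. y \<noteq> t \<and> dist y t < min e (norm t) \<longrightarrow> y \<noteq> 0 \<and> y \<notin> P"
  proof (intro allI impI conjI)
    fix y assume y: "y \<noteq> t \<and> dist y t < min e (norm t)"
    show "y \<notin> P" using e(2) y by auto
    show "y \<noteq> 0" using y by (auto simp: dist_norm)
  qed
  moreover have "min e (norm t) > 0" using e assms by simp
  ultimately show ?thesis unfolding eventually_at by blast
qed

lemma good_up: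
  assumes t: "t \<noteq> 0" and c: "(\<Phi> \<longlongrightarrow> c) (at t)"
  shows "(\<Phi> \<longlongrightarrow> \<mu> t * c) (at (p*t))"
proof -
  have tl0: "((\<lambda>y. y/p) \<longlongrightarrow> (p*t)/p) (at (p*t))" by (intro tendsto_intros) (use p0 in auto)
  have tl: "((\<lambda>y. y/p) \<longlongrightarrow> t) (at (p*t))" using tl0 p0 by simp
  have ne: "eventually (\<lambda>y. y \<noteq> p*t) (at (p*t))" unfolding eventually_at by (intro exI[of _ 1]) auto
  have ne2: "eventually (\<lambda>y. y/p \<in> UNIV \<and> y/p \<noteq> t) (at (p*t))"
    using ne by eventually_elim (use p0 in auto)
  have fl: "filterlim (\<lambda>y. y/p) (at t) (at (p*t))"
    unfolding filterlim_at using ne2 tl by (rule conjI)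
  have l1: "((\<lambda>y. \<Phi> (y/p)) \<longlongrightarrow> c) (at (p*t))" using filterlim_compose[OF c fl] .
  have l2: "((\<lambda>y. \<mu> (y/p)) \<longlongrightarrow> \<mu> t) (at (p*t))" by (rule isCont_tendsto_compose[OF \<mu>c[OF t] tl])
  have l3: "((\<lambda>y. \<mu> (y/p) * \<Phi> (y/p)) \<longlongrightarrow> \<mu> t * c) (at (p*t))" by (rule tendsto_mult[OF l2 l1])
  have fi: "\<forall>Q. eventually Q (at t) \<longrightarrow> eventually (\<lambda>x. Q (x/p)) (at (p*t))"
    using fl unfolding filterlim_iff .
  have "eventually (\<lambda>y. y/p \<noteq> 0 \<and> y/p \<notin> P) (at (p*t))"
    using fi ev_notP[OF t] by blast
  then have ev: "eventually (\<lambda>y. \<Phi> y = \<mu> (y/p) * \<Phi> (y/p)) (at (p*t))"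
  proof eventually_elim
    case (elim y)
    then have "\<Phi> (p * (y/p)) = \<mu> (y/p) * \<Phi> (y/p)" using feq by blast
    then show ?case using p0 by simp
  qed
  show ?thesis using tendsto_cong[OF ev, THEN iffD2, OF l3] .
qed

lemma good_down:
  assumes t: "t \<noteq> 0" and c: "(\<Phi> \<longlongrightarrow> c) (at (p*t))"
  shows "(\<Phi> \<longlongrightarrow> c / \<mu> t) (at t)"
proof -
  have tl: "((\<lambda>y. p*y) \<longlongrightarrow> p*t) (at t)" by (intro tendsto_intros)
  have ne: "eventually (\<lambda>y. y \<noteq> t) (at t)" unfolding eventually_at by (intro exI[of _ 1]) auto
  have ne2: "eventually (\<lambda>y. p*y \<in> UNIV \<and> p*y \<noteq> p*t) (at t)"
    using ne by eventually_elim (use p0 in auto)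
  have fl: "filterlim (\<lambda>y. p*y) (at (p*t)) (at t)"
    unfolding filterlim_at using ne2 tl by (rule conjI)
  have l1: "((\<lambda>y. \<Phi> (p*y)) \<longlongrightarrow> c) (at t)" using filterlim_compose[OF c fl] .
  have l2: "(\<mu> \<longlongrightarrow> \<mu> t) (at t)" using \<mu>c[OF t] unfolding isCont_def .
  have l3: "((\<lambda>y. \<Phi> (p*y) / \<mu> y) \<longlongrightarrow> c / \<mu> t) (at t)" by (rule tendsto_divide[OF l1 l2 \<mu>nz[OF t]])
  have ev: "eventually (\<lambda>y. \<Phi> y = \<Phi> (p*y) / \<mu> y) (at t)"
    using ev_notP[OF t]
  proof eventually_elim
    case (elim y)
    then have "\<Phi> (p * y) = \<mu> y * \<Phi> y" "\<mu> y \<noteq> 0" using feq \<mu>nz by auto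
    then show ?case by simp
  qed
  show ?thesis using tendsto_cong[OF ev, THEN iffD2, OF l3] .
qed

lemma good_pow:
  assumes s: "s \<noteq> 0" and c: "(\<Phi> \<longlongrightarrow> c) (at (p powi k * s))"
  shows "\<exists>c. (\<Phi> \<longlongrightarrow> c) (at s)"
proof -
  have A: "\<forall>s c. s \<noteq> 0 \<longrightarrow> (\<Phi> \<longlongrightarrow> c) (at (p ^ n * s)) \<longrightarrow> (\<exists>c. (\<Phi> \<longlongrightarrow> c) (at s))" for n
  proof (induction n)
    case 0
    show ?case by auto
  next
    case (Suc n)
    show ?case
    proof (intro allI impI)
      fix s c assume s: "s \<noteq> 0" and c: "(\<Phi> \<longlongrightarrow> c) (at (p ^ Suc n * s))"
      have e: "p ^ Suc n * s = p ^ n * (p * s)" by (simp add: ac_simps)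
      have c2: "(\<Phi> \<longlongrightarrow> c) (at (p ^ n * (p * s)))" using c unfolding e .
      have "p * s \<noteq> 0" using s p0 by simp
      then obtain c' where "(\<Phi> \<longlongrightarrow> c') (at (p * s))" using Suc.IH c2 by blast
      then show "\<exists>c. (\<Phi> \<longlongrightarrow> c) (at s)" using good_down[OF s] by blast
    qed
  qed
  have B: "\<forall>s c. s \<noteq> 0 \<longrightarrow> (\<Phi> \<longlongrightarrow> c) (at ((1/p) ^ n * s)) \<longrightarrow> (\<exists>c. (\<Phi> \<longlongrightarrow> c) (at s))" for n
  proof (induction n)
    case 0
    show ?case by auto
  next
    case (Suc n)
    show ?case
    proof (intro allI impI)
      fix s c assume s: "s \<noteq> 0" and c: "(\<Phi> \<longlongrightarrow> c) (at ((1/p) ^ Suc n * s))"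
      have e: "(1/p) ^ Suc n * s = (1/p) ^ n * ((1/p) * s)" by (simp add: ac_simps)
      have c2: "(\<Phi> \<longlongrightarrow> c) (at ((1/p) ^ n * ((1/p) * s)))" using c unfolding e .
      have s2: "(1/p) * s \<noteq> 0" using s p0 by simp
      then obtain c' where c': "(\<Phi> \<longlongrightarrow> c') (at ((1/p) * s))" using Suc.IH c2 by blast
      have "(\<Phi> \<longlongrightarrow> \<mu> ((1/p) * s) * c') (at (p * ((1/p) * s)))" by (rule good_up[OF s2 c'])
      moreover have "p * ((1/p) * s) = s" using p0 by simp
      ultimately show "\<exists>c. (\<Phi> \<longlongrightarrow> c) (at s)" by auto
    qed
  qed
  show ?thesis
  proof (cases "k \<ge> 0")
    case True
    then have "p powi k = p ^ nat k" by (simp add: power_int_def)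
    then have "(\<Phi> \<longlongrightarrow> c) (at (p ^ nat k * s))" using c by (simp only:)
    then show ?thesis using A s by blast
  next
    case False
    then have "p powi k = (1/p) ^ nat (-k)" by (simp add: power_int_def power_inverse inverse_eq_divide)
    then have "(\<Phi> \<longlongrightarrow> c) (at ((1/p) ^ nat (-k) * s))" using c by (simp only:)
    then show ?thesis using B s by blast
  qed
qed

lemma good_all: assumes "s \<in> P" shows "\<exists>c. (\<Phi> \<longlongrightarrow> c) (at s)"
proof -
  from lim[OF assms] obtain k c where c: "(\<Phi> \<longlongrightarrow> c) (at (p powi k * s))" by blast
  have "s \<noteq> 0" using assms P0 by auto
  then show ?thesis using good_pow[OF _ c] by blast
qed

definition Psi where "Psi x = (if x \<in> P then Lim (at x) \<Phi> else \<Phi> x)"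

lemma Psi_lim: assumes "x \<noteq> 0" shows "(\<Phi> \<longlongrightarrow> Psi x) (at x)"
proof (cases "x \<in> P")
  case True
  then obtain c where c: "(\<Phi> \<longlongrightarrow> c) (at x)" using good_all by blast
  then have "Lim (at x) \<Phi> = c" by (intro tendsto_Lim) auto
  then show ?thesis using c True by (simp add: Psi_def)
next
  case False
  then have "continuous (at x) \<Phi>" using hol[OF assms] field_differentiable_imp_continuous_at by blast
  then show ?thesis using False by (simp add: Psi_def continuous_at)
qed

lemma Psi_holo: "Psi holomorphic_on (-{0})"
proof (rule holo_local)
  show "open (-{0::complex})" by (intro open_Compl closed_singleton)
  fix x0 :: complex assume "x0 \<in> -{0}"
  then have x0: "x0 \<noteq> 0" by simp
  obtain e where e: "e > 0" "\<And>y. y \<noteq> x0 \<Longrightarrow> dist y x0 < e \<Longrightarrow> y \<notin> P" using Pdisc[OF x0] by blast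
  define e' where "e' = min e (norm x0)"
  have e': "e' > 0" using e x0 by (simp add: e'_def)
  have inB: "y \<notin> P \<and> y \<noteq> 0" if "y \<in> ball x0 e'" "y \<noteq> x0" for y
  proof
    have "dist y x0 < e" using that(1) by (simp add: e'_def dist_commute)
    then show "y \<notin> P" using e(2) that(2) by blast
    show "y \<noteq> 0" using that(1) by (auto simp: e'_def)
  qed
  have holB: "\<Phi> holomorphic_on (ball x0 e' - {x0})"
    unfolding holomorphic_on_def
  proof
    fix y assume "y \<in> ball x0 e' - {x0}"
    then have "\<Phi> field_differentiable at y" using inB hol by blast
    then show "\<Phi> field_differentiable at y within (ball x0 e' - {x0})" using field_differentiable_at_within by blast
  qed
  show "\<exists>e>0. Psi holomorphic_on ball x0 e"
  proof (cases "x0 \<in> P")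
    case True
    have "(\<lambda>y. if y = x0 then Psi x0 else \<Phi> y) holomorphic_on ball x0 e'"
      by (rule removable_singularity[OF holB open_ball Psi_lim[OF x0]])
    moreover have "(if y = x0 then Psi x0 else \<Phi> y) = Psi y" if "y \<in> ball x0 e'" for y
      using inB[OF that] by (cases "y = x0") (auto simp: Psi_def)
    ultimately have "Psi holomorphic_on ball x0 e'" by (rule holomorphic_transform)
    then show ?thesis using e' by blast
  next
    case False
    have "\<Phi> field_differentiable at x0" using hol[OF x0 False] .
    then have "\<Phi> holomorphic_on ball x0 e'"
      unfolding holomorphic_on_def using holB field_differentiable_at_within
      by (metis Diff_iff holomorphic_on_def insertCI open_ball open_delete at_within_open singletonD)
    moreover have "\<Phi> y = Psi y" if "y \<in> ball x0 e'" for y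
      using inB[OF that] False by (cases "y = x0") (auto simp: Psi_def)
    ultimately have "Psi holomorphic_on ball x0 e'" by (rule holomorphic_transform)
    then show ?thesis using e' by blast
  qed
qed

lemma Psi_cont: assumes "x \<noteq> 0" shows "isCont Psi x"
proof -
  have "open (-{0::complex})" by (intro open_Compl closed_singleton)
  then have "Psi field_differentiable at x" using Psi_holo assms holomorphic_on_imp_differentiable_at by blast
  then show ?thesis using field_differentiable_imp_continuous_at by blast
qed

lemma Psi_feq: assumes x: "x \<noteq> 0" shows "Psi (p*x) = \<mu> x * Psi x"
proof -
  have px: "p * x \<noteq> 0" using x p0 by simp
  have t1: "((\<lambda>y. p*y) \<longlongrightarrow> p*x) (at x)" by (intro tendsto_intros)
  have l1: "((\<lambda>y. Psi (p*y)) \<longlongrightarrow> Psi (p*x)) (at x)" by (rule isCont_tendsto_compose[OF Psi_cont[OF px] t1])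
  have t2: "((\<lambda>y. y) \<longlongrightarrow> x) (at x)" by (rule tendsto_ident_at)
  have l2: "((\<lambda>y. \<mu> y * Psi y) \<longlongrightarrow> \<mu> x * Psi x) (at x)"
    by (intro tendsto_mult isCont_tendsto_compose[OF \<mu>c[OF x] t2] isCont_tendsto_compose[OF Psi_cont[OF x] t2])
  have ev: "eventually (\<lambda>y. \<mu> y * Psi y = Psi (p*y)) (at x)"
    using ev_notP[OF x]
  proof eventually_elim
    case (elim y)
    then have "p * y \<notin> P" "p * y \<noteq> 0" using Pshift p0 by auto
    then show ?case using elim feq[of y] by (simp add: Psi_def)
  qed
  have l3: "((\<lambda>y. Psi (p*y)) \<longlongrightarrow> \<mu> x * Psi x) (at x)" using tendsto_cong[OF ev, THEN iffD1, OF l2] .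
  show ?thesis using tendsto_unique[OF _ l1 l3] by simp
qed

lemma Psi_bdd: "\<exists>M. \<forall>x. x \<noteq> 0 \<longrightarrow> norm (Psi x) \<le> M"
proof -
  define K where "K = (- ball 0 (norm p)) \<inter> cball (0::complex) 1"
  have cK: "compact K" unfolding K_def by (intro closed_Int_compact) auto
  have K0: "K \<subseteq> -{0}" using p by (auto simp: K_def)
  have "continuous_on K Psi"
    using Psi_holo K0 holomorphic_on_imp_continuous_on holomorphic_on_subset by blast
  then have "compact (Psi ` K)" using cK by (rule compact_continuous_image)
  then obtain M where M: "\<And>y. y \<in> K \<Longrightarrow> norm (Psi y) \<le> M"
    using compact_imp_bounded[of "Psi ` K"] by (auto simp: bounded_iff)
  have inw: "\<forall>y. y \<in> K \<longrightarrow> norm (Psi (p^n * y)) \<le> norm (Psi y)" for n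
  proof (induction n)
    case (Suc n)
    show ?case
    proof (intro allI impI)
      fix y assume y: "y \<in> K"
      have y0: "y \<noteq> 0" "norm y \<le> 1" using y K0 by (auto simp: K_def)
      have nz: "p^n * y \<noteq> 0" using y0 p0 by simp
      have "norm (p^n * y) \<le> 1"
      proof -
        have "norm p ^ n \<le> 1" using p by (simp add: power_le_one)
        then have "norm p ^ n * norm y \<le> 1 * 1" using y0 by (intro mult_mono) auto
        then show ?thesis by (simp add: norm_mult norm_power)
      qed
      then have m: "norm (\<mu> (p^n * y)) \<le> 1" using \<mu>1 nz by blast
      have "Psi (p ^ Suc n * y) = \<mu> (p^n * y) * Psi (p^n * y)"
        using Psi_feq[OF nz] by (simp add: ac_simps)
      then have "norm (Psi (p ^ Suc n * y)) = norm (\<mu> (p^n * y)) * norm (Psi (p^n * y))" by (simp add: norm_mult)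
      also have "\<dots> \<le> 1 * norm (Psi (p^n * y))" using m by (intro mult_right_mono) auto
      also have "\<dots> \<le> norm (Psi y)" using Suc.IH y by simp
      finally show "norm (Psi (p ^ Suc n * y)) \<le> norm (Psi y)" .
    qed
  qed simp
  have outw: "\<forall>y. y \<in> K \<longrightarrow> norm (Psi ((1/p)^n * y)) \<le> norm (Psi y)" for n
  proof (induction n)
    case (Suc n)
    show ?case
    proof (intro allI impI)
      fix y assume y: "y \<in> K"
      have y0: "y \<noteq> 0" "norm p \<le> norm y" using y K0 by (auto simp: K_def)
      define z where "z = (1/p) ^ Suc n * y"
      have z0: "z \<noteq> 0" using y0 p0 by (simp add: z_def)
      have "1 \<le> norm z"
      proof -
        have "norm z = norm y / norm p ^ Suc n" by (simp add: z_def norm_mult norm_power norm_divide power_one_over)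
        moreover have "norm p ^ Suc n \<le> norm y"
        proof -
          have "norm p ^ n \<le> 1" using p by (simp add: power_le_one)
          then have "norm p * norm p ^ n \<le> norm p * 1" using p by (intro mult_left_mono) auto
          then show ?thesis using y0 by simp
        qed
        moreover have "0 < norm p ^ Suc n" using p by simp
        ultimately show ?thesis by simp
      qed
      then have m: "1 \<le> norm (\<mu> z)" using \<mu>2 by blast
      have "p * z = (1/p)^n * y" using p0 by (simp add: z_def)
      then have "Psi ((1/p)^n * y) = \<mu> z * Psi z" using Psi_feq[OF z0] by simp
      then have "norm (Psi ((1/p)^n * y)) = norm (\<mu> z) * norm (Psi z)" by (simp add: norm_mult)
      moreover have "1 * norm (Psi z) \<le> norm (\<mu> z) * norm (Psi z)" using m by (intro mult_right_mono) auto
      ultimately have "norm (Psi z) \<le> norm (Psi ((1/p)^n * y))" by simp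
      also have "\<dots> \<le> norm (Psi y)" using Suc.IH y by simp
      finally show "norm (Psi ((1/p) ^ Suc n * y)) \<le> norm (Psi y)" by (simp add: z_def)
    qed
  qed simp
  have "norm (Psi x) \<le> M" if x: "x \<noteq> 0" for x
  proof -
    obtain k where k: "norm p powi (k+1) < norm x" "norm x \<le> norm p powi k"
      using annulus_index[of "norm p" "norm x"] p x by auto
    define y where "y = x / p powi k"
    have xy: "x = p powi k * y" using p0 by (simp add: y_def)
    have ny: "norm y = norm x / norm p powi k" by (simp add: y_def norm_divide norm_power_int)
    have pk: "0 < norm p powi k" using p by simp
    have "norm y \<le> 1" using k(2) pk by (simp add: ny)
    moreover have "norm p \<le> norm y"
    proof -
      have "norm p powi (k+1) = norm p powi k * norm p" using p by (simp add: power_int_add)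
      then have "norm p * norm p powi k < norm x" using k(1) by (simp add: mult.commute)
      then show ?thesis using pk by (simp add: ny field_simps)
    qed
    ultimately have yK: "y \<in> K" by (auto simp: K_def)
    show ?thesis
    proof (cases "k \<ge> 0")
      case True
      then have xe: "x = p ^ nat k * y" using xy by (simp add: power_int_def)
      have "norm (Psi (p ^ nat k * y)) \<le> norm (Psi y)" using inw yK by blast
      then show ?thesis using M[OF yK] unfolding xe by linarith
    next
      case False
      then have xe: "x = (1/p) ^ nat (-k) * y" using xy by (simp add: power_int_def power_inverse inverse_eq_divide)
      have "norm (Psi ((1/p) ^ nat (-k) * y)) \<le> norm (Psi y)" using outw yK by blast
      then show ?thesis using M[OF yK] unfolding xe by linarith
    qed
  qed
  then show ?thesis by blast
qed

lemma ell_main: "\<exists>c. (\<forall>x. x \<noteq> 0 \<longrightarrow> x \<notin> P \<longrightarrow> \<Phi> x = c) \<and> (\<forall>x. x \<noteq> 0 \<longrightarrow> c = \<mu> x * c)"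
proof -
  obtain M where M: "\<And>x. x \<noteq> 0 \<Longrightarrow> norm (Psi x) \<le> M" using Psi_bdd by blast
  have h: "(Psi \<circ> exp) holomorphic_on UNIV"
    by (rule holomorphic_on_compose_gen[OF _ Psi_holo]) (auto intro: holomorphic_intros)
  have "\<forall>w. norm ((Psi \<circ> exp) w) \<le> M" using M by simp
  then have "bounded (range (Psi \<circ> exp))" unfolding bounded_iff by blast
  from Liouville_theorem[OF h this] obtain c where c: "\<And>w. (Psi \<circ> exp) w = c"
    by (auto simp: constant_on_def)
  have Pc: "Psi x = c" if "x \<noteq> 0" for x
    using c[of "ln x"] that by simp
  have "\<Phi> x = c" if "x \<noteq> 0" "x \<notin> P" for x using Pc[OF that(1)] that(2) by (simp add: Psi_def)
  moreover have "c = \<mu> x * c" if "x \<noteq> 0" for x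
  proof -
    have "p * x \<noteq> 0" using that p0 by simp
    then show ?thesis using Psi_feq[OF that] Pc[OF that] Pc[of "p*x"] by simp
  qed
  ultimately show ?thesis by blast
qed

end


lemma jt_diff_at:
  assumes "norm p < 1" "y \<noteq> 0"
  shows "(\<lambda>y. jtheta y p) field_differentiable at y"
proof -
  have "open (-{0::complex})" by (intro open_Compl closed_singleton)
  then show ?thesis using jt_holo[OF assms(1)] assms(2) holomorphic_on_imp_differentiable_at by blast
qed

lemma jE_diff_at:
  assumes "norm p < 1" "y \<noteq> 0"
  shows "(\<lambda>y. jE y p) field_differentiable at y"
proof -
  have "open (-{0::complex})" by (intro open_Compl closed_singleton)
  then show ?thesis using jE_holo[OF assms(1)] assms(2) holomorphic_on_imp_differentiable_at by blast
qed

lemma th_diff_at: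
  assumes "0 < norm p" "norm p < 1" "y \<noteq> 0"
  shows "(\<lambda>y. thsum y p) field_differentiable at y"
proof -
  have "open (-{0::complex})" by (intro open_Compl closed_singleton)
  then show ?thesis using th_holo[OF assms(1,2)] assms(3) holomorphic_on_imp_differentiable_at by blast
qed

lemma comp_lin_diff:
  assumes "(\<lambda>y. g y) field_differentiable at (x*c)"
  shows "(\<lambda>y. g (y*c)) field_differentiable at x"
proof -
  have "(\<lambda>y. y*c) field_differentiable at x" by (auto intro!: derivative_intros)
  from field_differentiable_compose[OF this assms] show ?thesis by (simp add: o_def)
qed

lemma jt_zero:
  assumes "0 < norm p" "norm p < 1"
  shows "jtheta (p powi k) p = 0"
proof -
  have p0: "p \<noteq> 0" using assms by auto
  have A: "jtheta (p ^ n) p = 0" for n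
  proof (induction n)
    case 0 then show ?case using qp_one[OF assms(2)] by (simp add: jtheta_def)
  next
    case (Suc n)
    then show ?case using jt_shift[OF assms(2) p0, of "p^n"] p0 by simp
  qed
  have B: "jtheta ((1/p) ^ n) p = 0" for n
  proof (induction n)
    case 0 then show ?case using qp_one[OF assms(2)] by (simp add: jtheta_def)
  next
    case (Suc n)
    have "jtheta (p * (1/p)^Suc n) p = - jtheta ((1/p)^Suc n) p / (1/p)^Suc n"
      using jt_shift[OF assms(2) p0, of "(1/p)^Suc n"] p0 by simp
    moreover have "p * (1/p)^Suc n = (1/p)^n" using p0 by simp
    ultimately show ?case using Suc p0 by simp
  qed
  show ?thesis
  proof (cases "k \<ge> 0")
    case True then show ?thesis using A[of "nat k"] by (simp add: power_int_def)
  next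
    case False then show ?thesis using B[of "nat (-k)"] by (simp add: power_int_def power_inverse inverse_eq_divide)
  qed
qed

lemma jt_nz_iff:
  assumes "0 < norm p" "norm p < 1" "y \<noteq> 0"
  shows "jtheta y p \<noteq> 0 \<longleftrightarrow> (\<forall>k::int. y \<noteq> p powi k)"
  using jt_zero[OF assms(1,2)] jt_nonzero[OF assms(2) _ assms(3)] assms by auto

lemma lim_template:
  fixes \<Phi> G A H :: "complex \<Rightarrow> complex"
  assumes ev: "eventually (\<lambda>x. \<Phi> x = G x + (A x - A a) / (x - a) * H x) (at a)"
    and G: "isCont G a" and A: "A field_differentiable at a" and H: "isCont H a"
  shows "\<exists>l. (\<Phi> \<longlongrightarrow> l) (at a)"
proof -
  obtain D where D: "(A has_field_derivative D) (at a)" using A field_differentiable_def by blast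
  then have dq: "((\<lambda>x. (A x - A a) / (x - a)) \<longlongrightarrow> D) (at a)" using has_field_derivative_iff by blast
  have "((\<lambda>x. G x + (A x - A a) / (x - a) * H x) \<longlongrightarrow> G a + D * H a) (at a)"
    using G dq H unfolding isCont_def by (intro tendsto_intros)
  then have "(\<Phi> \<longlongrightarrow> G a + D * H a) (at a)" using tendsto_cong[OF ev, THEN iffD2] by blast
  then show ?thesis by blast
qed

lemma jtp_const:
  assumes p: "0 < norm p" "norm p < 1"
  shows "\<exists>C. \<forall>z. z \<noteq> 0 \<longrightarrow> jtheta z p \<noteq> 0 \<longrightarrow> thsum z p = C * jtheta z p"
proof -
  have p0: "p \<noteq> 0" using p by auto
  define P where "P = range (\<lambda>k::int. 1 * p powi k)"
  define \<Phi> where "\<Phi> z = thsum z p / jtheta z p" for z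
  have notP: "jtheta x p \<noteq> 0" if "x \<noteq> 0" "x \<notin> P" for x
    using jt_nonzero[OF p(2) p0 that(1)] that(2) by (auto simp: P_def)
  interpret E: ellctx p \<Phi> "\<lambda>_. 1" P
  proof
    show "0 < norm p" "norm p < 1" by (rule p)+
    show "0 \<notin> P" using p0 by (auto simp: P_def)
    fix x :: complex
    assume x: "x \<noteq> 0"
    show "p * x \<in> P \<longleftrightarrow> x \<in> P"
    proof
      assume "p * x \<in> P"
      then obtain k where "p * x = p powi k" by (auto simp: P_def)
      then have "x = p powi (k - 1)" using p0 by (simp add: power_int_diff field_simps)
      then show "x \<in> P" by (auto simp: P_def)
    next
      assume "x \<in> P"
      then obtain k where "x = p powi k" by (auto simp: P_def)
      then have "p * x = p powi (k + 1)" using p0 by (simp add: power_int_add)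
      then show "p * x \<in> P" by (auto simp: P_def)
    qed
    show "\<exists>e>0. \<forall>y. y \<noteq> x \<and> dist y x < e \<longrightarrow> y \<notin> P"
      unfolding P_def by (rule geo_disc[OF p _ x]) simp
    show "isCont (\<lambda>_. 1::complex) x" by simp
    show "(1::complex) \<noteq> 0" by simp
    show "norm x \<le> 1 \<Longrightarrow> norm (1::complex) \<le> 1" by simp
  next
    fix x :: complex
    show "1 \<le> norm x \<Longrightarrow> 1 \<le> norm (1::complex)" by simp
  next
    fix x :: complex assume x: "x \<noteq> 0" "x \<notin> P"
    show "\<Phi> field_differentiable at x"
      unfolding \<Phi>_def using th_diff_at[OF p x(1)] jt_diff_at[OF p(2) x(1)] notP[OF x]
      by (intro field_differentiable_divide) auto
    show "\<Phi> (p * x) = 1 * \<Phi> x"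
      unfolding \<Phi>_def using th_shift[OF p x(1)] jt_shift[OF p(2) p0 x(1)] x(1) by simp
  next
    fix s assume "s \<in> P"
    then obtain k0 where s: "s = p powi k0" by (auto simp: P_def)
    have s1: "p powi (-k0) * s = 1" using p0 by (simp add: s power_int_minus)
    define H where "H z = - 1 / jE z p" for z
    have ev: "eventually (\<lambda>z. \<Phi> z = 0 + (thsum z p - thsum 1 p) / (z - 1) * H z) (at 1)"
    proof -
      have "eventually (\<lambda>z. z \<noteq> 1) (at (1::complex))" unfolding eventually_at by (intro exI[of _ 1]) auto
      then show ?thesis
      proof eventually_elim
        case (elim z)
        have "(1 - z) * jE z p = - ((z - 1) * jE z p)" by (simp add: algebra_simps)
        then show ?case unfolding \<Phi>_def H_def jt_E[OF p(2)] th_one[OF p] by (simp add: divide_minus_right)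
      qed
    qed
    have "qpoch p p \<noteq> 0"
    proof (rule qp_nonzero[OF p(2)])
      fix n
      have "norm (p * p^n) = norm p ^ Suc n" by (simp add: norm_mult norm_power)
      also have "\<dots> < 1" using p(2) by (simp only: power_less_one_iff norm_ge_zero) simp
      finally show "p * p^n \<noteq> 1" by auto
    qed
    then have E1: "jE 1 p \<noteq> 0" by (simp add: jE_1)
    have Hc: "isCont H 1"
    proof -
      have "isCont (\<lambda>z. jE z p) 1" using jE_diff_at[OF p(2), of 1] field_differentiable_imp_continuous_at by auto
      then show ?thesis unfolding H_def using E1 by (intro continuous_intros) auto
    qed
    have "\<exists>l. (\<Phi> \<longlongrightarrow> l) (at 1)"
      by (rule lim_template[OF ev _ th_diff_at[OF p] Hc]) simp_all
    then show "\<exists>k::int. \<exists>c. (\<Phi> \<longlongrightarrow> c) (at (p powi k * s))" using s1 by metis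
  qed
  from E.ell_main obtain c where c: "\<And>x. x \<noteq> 0 \<Longrightarrow> x \<notin> P \<Longrightarrow> \<Phi> x = c" by blast
  have "thsum z p = c * jtheta z p" if "z \<noteq> 0" "jtheta z p \<noteq> 0" for z
  proof -
    have "z \<notin> P" using that jt_zero[OF p] by (auto simp: P_def)
    then show ?thesis using c[OF that(1)] that(2) by (simp add: \<Phi>_def field_simps)
  qed
  then show ?thesis by blast
qed


lemma geo_shift:
  fixes p c y :: complex
  assumes "p \<noteq> 0"
  shows "p * y \<in> range (\<lambda>k::int. c * p powi k) \<longleftrightarrow> y \<in> range (\<lambda>k::int. c * p powi k)"
proof
  assume "p * y \<in> range (\<lambda>k::int. c * p powi k)"
  then obtain k where k: "p * y = c * p powi k" by auto
  have "y = (p * y) / p" using assms by simp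
  also have "\<dots> = c * p powi k / p" unfolding k ..
  finally have "y = c * p powi k / p" .
  moreover have "p powi (k-1) = p powi k / p" using assms by (simp add: power_int_diff)
  ultimately have "y = c * p powi (k - 1)" by simp
  then show "y \<in> range (\<lambda>k::int. c * p powi k)" by blast
next
  assume "y \<in> range (\<lambda>k::int. c * p powi k)"
  then obtain k where "y = c * p powi k" by auto
  then have "p * y = c * p powi (k + 1)" using assms by (simp add: power_int_add)
  then show "p * y \<in> range (\<lambda>k::int. c * p powi k)" by blast
qed

lemma geo_disc2:
  fixes p c d x :: complex
  assumes p: "0 < norm p" "norm p < 1" and c: "c \<noteq> 0" "d \<noteq> 0" and x: "x \<noteq> 0"
  shows "\<exists>e>0. \<forall>y. y \<noteq> x \<and> dist y x < e \<longrightarrow> y \<notin> range (\<lambda>k::int. c * p powi k) \<union> range (\<lambda>k::int. d * p powi k)"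
proof -
  obtain e1 where e1: "e1 > 0" "\<forall>y. y \<noteq> x \<and> dist y x < e1 \<longrightarrow> y \<notin> range (\<lambda>k::int. c * p powi k)"
    using geo_disc[OF p c(1) x] by blast
  obtain e2 where e2: "e2 > 0" "\<forall>y. y \<noteq> x \<and> dist y x < e2 \<longrightarrow> y \<notin> range (\<lambda>k::int. d * p powi k)"
    using geo_disc[OF p c(2) x] by blast
  have "min e1 e2 > 0" using e1 e2 by simp
  moreover have "\<forall>y. y \<noteq> x \<and> dist y x < min e1 e2 \<longrightarrow> y \<notin> range (\<lambda>k::int. c * p powi k) \<union> range (\<lambda>k::int. d * p powi k)"
    using e1(2) e2(2) by auto
  ultimately show ?thesis by blast
qed

lemma hsum_diff_at:
  assumes p: "0 < norm p" "norm p < 1" and w: "w \<noteq> 0" and y: "y \<noteq> 0"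
    and nz: "\<And>r. 1 - p powi (r-1) * y * w \<noteq> 0"
  shows "(\<lambda>y. hsum y w p) field_differentiable at y"
proof -
  obtain e where e: "e > 0" "(\<lambda>x. \<Sum>\<^sub>\<infinity>r\<in>UNIV - {}. hterm p x w r) holomorphic_on ball y e"
    using hsum_holo_gen[OF p w y, of "{}"] nz by auto
  then have "(\<lambda>x. hsum x w p) holomorphic_on ball y e" by (simp add: hsum_def)
  then show ?thesis using e(1) holomorphic_on_imp_differentiable_at by (metis centre_in_ball open_ball)
qed

lemma hsum_S_cont:
  assumes p: "0 < norm p" "norm p < 1" and w: "w \<noteq> 0"
  shows "isCont (\<lambda>x. \<Sum>\<^sub>\<infinity>r\<in>UNIV - {1}. hterm p x w r) (1/w)"
proof -
  obtain e where e: "e > 0" "(\<lambda>x. \<Sum>\<^sub>\<infinity>r\<in>UNIV - {1}. hterm p x w r) holomorphic_on ball (1/w) e"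
    using hsum_pole_holo[OF p w] by blast
  then have "(\<lambda>x. \<Sum>\<^sub>\<infinity>r\<in>UNIV - {1}. hterm p x w r) field_differentiable at (1/w)"
    using holomorphic_on_imp_differentiable_at by (metis centre_in_ball open_ball)
  then show ?thesis using field_differentiable_imp_continuous_at by blast
qed

lemma notgeo_den:
  fixes p y w :: complex
  assumes "\<And>k::int. y * w \<noteq> p powi k" "p \<noteq> 0"
  shows "1 - p powi (r-1) * y * w \<noteq> 0"
proof
  assume "1 - p powi (r-1) * y * w = 0"
  then have e: "p powi (r-1) * (y * w) = 1" by (simp add: mult.assoc)
  have inv: "p powi (r-1) * p powi (1-r) = 1" using assms(2) by (simp add: power_int_add[symmetric])
  have "y * w = (p powi (r-1) * p powi (1-r)) * (y * w)" using inv by simp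
  also have "\<dots> = (p powi (r-1) * (y * w)) * p powi (1-r)" by (simp only: ac_simps)
  also have "\<dots> = p powi (1 - r)" using e by simp
  finally have "y * w = p powi (1 - r)" .
  then show False using assms(1) by blast
qed


lemma alg1:
  fixes u z j S T A :: complex
  assumes "u \<noteq> 0" "z \<noteq> 0" "j \<noteq> 0"
  shows "(- z / u + S) / j - T - A / u = S / j - T + (A - - z / j) / (- u / z) * (1 / z)"
  using assms by (simp add: field_simps)

lemma alg0:
  fixes u z j S T B :: complex
  assumes "u \<noteq> 0" "z \<noteq> 0" "j \<noteq> 0"
  shows "T - (- z / u + S) / j - B / u = T - S / j + (B - z / j) / (- u / z) * (1 / z)"
  using assms by (simp add: field_simps)

lemma m_diff:
  fixes p x z0 z1 :: complex
  assumes p: "0 < norm p" "norm p < 1"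
    and z0: "z0 \<noteq> 0" and z1: "z1 \<noteq> 0"
    and j0: "jtheta z0 p \<noteq> 0" and j1: "jtheta z1 p \<noteq> 0" and jd: "jtheta (z1/z0) p \<noteq> 0"
    and x: "x \<noteq> 0" and jx0: "jtheta (x*z0) p \<noteq> 0" and jx1: "jtheta (x*z1) p \<noteq> 0"
  shows "hsum x z1 p / jtheta z1 p - hsum x z0 p / jtheta z0 p
     = z0 * qpoch p p ^ 3 * jtheta (z1/z0) p * jtheta (x*z0*z1) p / (jtheta z0 p * jtheta z1 p * jtheta (x*z0) p * jtheta (x*z1) p)"
proof -
  have p0: "p \<noteq> 0" using p by auto
  define J where "J = qpoch p p ^ 3"
  have J: "J \<noteq> 0"
  proof -
    have "qpoch p p \<noteq> 0"
    proof (rule qp_nonzero[OF p(2)])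
      fix n
      have "norm (p * p^n) = norm p ^ Suc n" by (simp add: norm_mult norm_power)
      also have "\<dots> < 1" using p(2) by (simp only: power_less_one_iff norm_ge_zero) simp
      finally show "p * p^n \<noteq> 1" by auto
    qed
    then show ?thesis by (simp add: J_def)
  qed
  have jE1: "jE 1 p = J" by (simp add: jE_1 J_def)
  define R where "R y = z0 * J * jtheta (z1/z0) p * jtheta (y*(z0*z1)) p / (jtheta z0 p * jtheta z1 p * jtheta (y*z0) p * jtheta (y*z1) p)" for y
  define \<Phi> where "\<Phi> y = hsum y z1 p / jtheta z1 p - hsum y z0 p / jtheta z0 p - R y" for y
  define P where "P = range (\<lambda>k::int. (1/z0) * p powi k) \<union> range (\<lambda>k::int. (1/z1) * p powi k)"
  have notP: "(\<forall>k::int. y * z0 \<noteq> p powi k) \<and> (\<forall>k::int. y * z1 \<noteq> p powi k)" if "y \<notin> P" for y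
  proof (intro conjI allI)
    fix k :: int
    show "y * z0 \<noteq> p powi k"
    proof
      assume "y * z0 = p powi k"
      then have "y = (1/z0) * p powi k" using z0 by (simp add: field_simps)
      then show False using that by (auto simp: P_def)
    qed
    show "y * z1 \<noteq> p powi k"
    proof
      assume "y * z1 = p powi k"
      then have "y = (1/z1) * p powi k" using z1 by (simp add: field_simps)
      then show False using that by (auto simp: P_def)
    qed
  qed
  have xP: "x \<notin> P"
  proof
    assume "x \<in> P"
    then obtain k where "x = (1/z0) * p powi k \<or> x = (1/z1) * p powi k" by (auto simp: P_def)
    then have "x * z0 = p powi k \<or> x * z1 = p powi k" using z0 z1 by auto
    then show False using jx0 jx1 jt_zero[OF p, of k] by auto
  qed
  obtain C where C: "\<And>z. z \<noteq> 0 \<Longrightarrow> jtheta z p \<noteq> 0 \<Longrightarrow> thsum z p = C * jtheta z p"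
    using jtp_const[OF p] by blast
  have zd: "z1/z0 \<noteq> 0" using z0 z1 by simp
  have jdi: "jtheta (z0/z1) p \<noteq> 0"
  proof -
    have "jtheta (1/(z1/z0)) p = - jtheta (z1/z0) p / (z1/z0)" by (rule jt_inv[OF p(2) p0 zd])
    then show ?thesis using jd z0 z1 by simp
  qed
  have L1: "\<exists>l. (\<Phi> \<longlongrightarrow> l) (at (1/z1))"
  proof -
    define a1 where "a1 = 1/z1"
    define S1 where "S1 y = (\<Sum>\<^sub>\<infinity>r\<in>UNIV - {1}. hterm p y z1 r)" for y
    define A where "A y = z0 * J * jtheta (z1/z0) p * jtheta (y*(z0*z1)) p / (jtheta z0 p * jtheta z1 p * jtheta (y*z0) p * jE (y*z1) p)" for y
    define G where "G y = S1 y / jtheta z1 p - hsum y z0 p / jtheta z0 p" for y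
    have a1: "a1 \<noteq> 0" "a1 * (z0*z1) = z0" "a1 * z0 = z0/z1" "a1 * z1 = 1" using z1 by (auto simp: a1_def)
    have Aa1: "A a1 = - z1 / jtheta z1 p"
    proof -
      have "jtheta (z0/z1) p = - jtheta (z1/z0) p / (z1/z0)"
        using jt_inv[OF p(2) p0 zd] z0 z1 by simp
      then show ?thesis unfolding A_def a1 jE1 using z0 z1 j0 j1 jd J jdi by (simp add: field_simps)
    qed
    have ev: "eventually (\<lambda>y. \<Phi> y = G y + (A y - A a1) / (y - a1) * (1/z1)) (at a1)"
    proof -
      have "eventually (\<lambda>y. y \<noteq> a1 \<and> y \<noteq> 0) (at a1)"
        unfolding eventually_at using a1(1) by (intro exI[of _ "norm a1"]) (auto simp: dist_norm)
      then show ?thesis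
      proof eventually_elim
        case (elim y)
        have u: "1 - y * z1 \<noteq> 0" using elim z1 by (auto simp: a1_def field_simps)
        have hs: "hsum y z1 p = - z1 / (1 - y * z1) + S1 y" unfolding S1_def by (rule hsum_pole_split[OF p z1]) (use elim in auto)
        have Ry: "R y = A y / (1 - y * z1)"
          unfolding R_def A_def jt_E[OF p(2), of "y*z1"] by (simp add: divide_divide_eq_left ac_simps)
        have ya: "y - a1 = - (1 - y * z1) / z1" using z1 by (simp add: a1_def field_simps)
        have "\<Phi> y = (- z1 / (1 - y * z1) + S1 y) / jtheta z1 p - hsum y z0 p / jtheta z0 p - A y / (1 - y * z1)"
          unfolding \<Phi>_def hs Ry ..
        also have "\<dots> = S1 y / jtheta z1 p - hsum y z0 p / jtheta z0 p + (A y - - z1 / jtheta z1 p) / (- (1 - y * z1) / z1) * (1 / z1)"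
          by (rule alg1[OF u z1 j1])
        finally show ?case unfolding G_def Aa1 ya .
      qed
    qed
    have Gc: "isCont G a1"
    proof -
      have "\<forall>k::int. a1 * z0 \<noteq> p powi k"
      proof
        fix k :: int show "a1 * z0 \<noteq> p powi k"
        proof
          assume "a1 * z0 = p powi k"
          then have "z1/z0 = p powi (-k)" using a1(3) z0 z1 by (simp add: power_int_minus field_simps)
          then show False using jd jt_zero[OF p] by simp
        qed
      qed
      then have "\<And>r. 1 - p powi (r-1) * a1 * z0 \<noteq> 0" using notgeo_den[OF _ p0] by blast
      then have "(\<lambda>y. hsum y z0 p) field_differentiable at a1" by (rule hsum_diff_at[OF p z0 a1(1)])
      then have "isCont (\<lambda>y. hsum y z0 p) a1" using field_differentiable_imp_continuous_at by blast
      moreover have "isCont S1 a1" unfolding S1_def a1_def by (rule hsum_S_cont[OF p z1])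
      ultimately show ?thesis unfolding G_def using j0 j1 by (intro continuous_intros)
    qed
    have Ad: "A field_differentiable at a1"
    proof -
      have d1: "(\<lambda>y. jtheta (y*(z0*z1)) p) field_differentiable at a1"
        by (rule comp_lin_diff, rule jt_diff_at[OF p(2)]) (use a1 z0 z1 in simp)
      have d2: "(\<lambda>y. jtheta (y*z0) p) field_differentiable at a1"
        by (rule comp_lin_diff, rule jt_diff_at[OF p(2)]) (use a1 z0 z1 in simp)
      have d3: "(\<lambda>y. jE (y*z1) p) field_differentiable at a1"
        by (rule comp_lin_diff, rule jE_diff_at[OF p(2)]) (use a1 in simp)
      have nz: "jtheta z0 p * jtheta z1 p * jtheta (a1*z0) p * jE (a1*z1) p \<noteq> 0"
        using j0 j1 jdi J jE1 a1 by simp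
      show ?thesis unfolding A_def using d1 d2 d3 nz by (intro derivative_intros) auto
    qed
    have "\<exists>l. (\<Phi> \<longlongrightarrow> l) (at a1)" by (rule lim_template[OF ev Gc Ad]) simp
    then show ?thesis by (simp add: a1_def)
  qed
  have L0: "\<exists>l. (\<Phi> \<longlongrightarrow> l) (at (1/z0))"
  proof -
    define a0 where "a0 = 1/z0"
    define S0 where "S0 y = (\<Sum>\<^sub>\<infinity>r\<in>UNIV - {1}. hterm p y z0 r)" for y
    define B where "B y = z0 * J * jtheta (z1/z0) p * jtheta (y*(z0*z1)) p / (jtheta z0 p * jtheta z1 p * jE (y*z0) p * jtheta (y*z1) p)" for y
    define G where "G y = hsum y z1 p / jtheta z1 p - S0 y / jtheta z0 p" for y
    have a0: "a0 \<noteq> 0" "a0 * (z0*z1) = z1" "a0 * z0 = 1" "a0 * z1 = z1/z0" using z0 by (auto simp: a0_def)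
    have Ba0: "B a0 = z0 / jtheta z0 p"
      unfolding B_def a0 jE1 using z0 z1 j0 j1 jd J by (simp add: field_simps)
    have ev: "eventually (\<lambda>y. \<Phi> y = G y + (B y - B a0) / (y - a0) * (1/z0)) (at a0)"
    proof -
      have "eventually (\<lambda>y. y \<noteq> a0 \<and> y \<noteq> 0) (at a0)"
        unfolding eventually_at using a0(1) by (intro exI[of _ "norm a0"]) (auto simp: dist_norm)
      then show ?thesis
      proof eventually_elim
        case (elim y)
        have u: "1 - y * z0 \<noteq> 0" using elim z0 by (auto simp: a0_def field_simps)
        have hs: "hsum y z0 p = - z0 / (1 - y * z0) + S0 y" unfolding S0_def by (rule hsum_pole_split[OF p z0]) (use elim in auto)
        have Ry: "R y = B y / (1 - y * z0)"
          unfolding R_def B_def jt_E[OF p(2), of "y*z0"] by (simp add: divide_divide_eq_left ac_simps)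
        have ya: "y - a0 = - (1 - y * z0) / z0" using z0 by (simp add: a0_def field_simps)
        have "\<Phi> y = hsum y z1 p / jtheta z1 p - (- z0 / (1 - y * z0) + S0 y) / jtheta z0 p - B y / (1 - y * z0)"
          unfolding \<Phi>_def hs Ry ..
        also have "\<dots> = hsum y z1 p / jtheta z1 p - S0 y / jtheta z0 p + (B y - z0 / jtheta z0 p) / (- (1 - y * z0) / z0) * (1 / z0)"
          by (rule alg0[OF u z0 j0])
        finally show ?case unfolding G_def Ba0 ya .
      qed
    qed
    have Gc: "isCont G a0"
    proof -
      have "\<forall>k::int. a0 * z1 \<noteq> p powi k"
      proof
        fix k :: int show "a0 * z1 \<noteq> p powi k"
        proof
          assume "a0 * z1 = p powi k"
          then have "z1/z0 = p powi k" using a0(4) by simp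
          then show False using jd jt_zero[OF p] by simp
        qed
      qed
      then have "\<And>r. 1 - p powi (r-1) * a0 * z1 \<noteq> 0" using notgeo_den[OF _ p0] by blast
      then have "(\<lambda>y. hsum y z1 p) field_differentiable at a0" by (rule hsum_diff_at[OF p z1 a0(1)])
      then have "isCont (\<lambda>y. hsum y z1 p) a0" using field_differentiable_imp_continuous_at by blast
      moreover have "isCont S0 a0" unfolding S0_def a0_def by (rule hsum_S_cont[OF p z0])
      ultimately show ?thesis unfolding G_def using j0 j1 by (intro continuous_intros)
    qed
    have Bd: "B field_differentiable at a0"
    proof -
      have d1: "(\<lambda>y. jtheta (y*(z0*z1)) p) field_differentiable at a0"
        by (rule comp_lin_diff, rule jt_diff_at[OF p(2)]) (use a0 z0 z1 in simp)
      have d2: "(\<lambda>y. jE (y*z0) p) field_differentiable at a0"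
        by (rule comp_lin_diff, rule jE_diff_at[OF p(2)]) (use a0 in simp)
      have d3: "(\<lambda>y. jtheta (y*z1) p) field_differentiable at a0"
        by (rule comp_lin_diff, rule jt_diff_at[OF p(2)]) (use a0 z0 z1 in simp)
      have nz: "jtheta z0 p * jtheta z1 p * jE (a0*z0) p * jtheta (a0*z1) p \<noteq> 0"
        using j0 j1 jd J jE1 a0 by simp
      show ?thesis unfolding B_def using d1 d2 d3 nz by (intro derivative_intros) auto
    qed
    have "\<exists>l. (\<Phi> \<longlongrightarrow> l) (at a0)" by (rule lim_template[OF ev Gc Bd]) simp
    then show ?thesis by (simp add: a0_def)
  qed
  interpret E: ellctx p \<Phi> "\<lambda>y. - y" P
  proof
    show "0 < norm p" "norm p < 1" by (rule p)+
    show "0 \<notin> P" using p0 z0 z1 by (auto simp: P_def)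
    fix y :: complex assume y: "y \<noteq> 0"
    show "p * y \<in> P \<longleftrightarrow> y \<in> P" unfolding P_def using geo_shift[OF p0] by blast
    show "\<exists>e>0. \<forall>w. w \<noteq> y \<and> dist w y < e \<longrightarrow> w \<notin> P"
      unfolding P_def by (rule geo_disc2[OF p _ _ y]) (use z0 z1 in auto)
    show "isCont (\<lambda>y. - y) y" by simp
    show "- y \<noteq> 0" using y by simp
    show "norm y \<le> 1 \<Longrightarrow> norm (- y) \<le> 1" by simp
  next
    fix y :: complex show "1 \<le> norm y \<Longrightarrow> 1 \<le> norm (- y)" by simp
  next
    fix y :: complex assume y: "y \<noteq> 0" "y \<notin> P"
    from notP[OF y(2)] have n0: "\<forall>k::int. y * z0 \<noteq> p powi k" and n1: "\<forall>k::int. y * z1 \<noteq> p powi k" by auto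
    have yz: "y * z0 \<noteq> 0" "y * z1 \<noteq> 0" "y * (z0 * z1) \<noteq> 0" using y z0 z1 by auto
    have jy0: "jtheta (y*z0) p \<noteq> 0" using jt_nonzero[OF p(2) p0 yz(1)] n0 by blast
    have jy1: "jtheta (y*z1) p \<noteq> 0" using jt_nonzero[OF p(2) p0 yz(2)] n1 by blast
    have d0: "\<And>r. 1 - p powi (r-1) * y * z0 \<noteq> 0" using notgeo_den[OF _ p0] n0 by blast
    have d1: "\<And>r. 1 - p powi (r-1) * y * z1 \<noteq> 0" using notgeo_den[OF _ p0] n1 by blast
    have f1: "(\<lambda>y. jtheta (y*(z0*z1)) p) field_differentiable at y"
      by (rule comp_lin_diff, rule jt_diff_at[OF p(2)]) (use yz in simp)
    have f2: "(\<lambda>y. jtheta (y*z0) p) field_differentiable at y"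
      by (rule comp_lin_diff, rule jt_diff_at[OF p(2)]) (use yz in simp)
    have f3: "(\<lambda>y. jtheta (y*z1) p) field_differentiable at y"
      by (rule comp_lin_diff, rule jt_diff_at[OF p(2)]) (use yz in simp)
    have nzR: "jtheta z0 p * jtheta z1 p * jtheta (y*z0) p * jtheta (y*z1) p \<noteq> 0" using j0 j1 jy0 jy1 by simp
    show "\<Phi> field_differentiable at y"
      unfolding \<Phi>_def R_def using hsum_diff_at[OF p z1 y(1) d1] hsum_diff_at[OF p z0 y(1) d0] f1 f2 f3 nzR j0 j1
      by (intro derivative_intros) auto
    have py: "p * y \<noteq> 0" using p0 y by simp
    have h1: "hsum (p*y) z1 p = thsum z1 p - y * hsum y z1 p" by (rule hsum_shift[OF p z1 y(1) d1])
    have h0: "hsum (p*y) z0 p = thsum z0 p - y * hsum y z0 p" by (rule hsum_shift[OF p z0 y(1) d0])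
    have t1: "thsum z1 p = C * jtheta z1 p" by (rule C[OF z1 j1])
    have t0: "thsum z0 p = C * jtheta z0 p" by (rule C[OF z0 j0])
    have r1: "jtheta (p*y*(z0*z1)) p = - jtheta (y*(z0*z1)) p / (y*(z0*z1))"
      using jt_shift[OF p(2) p0 yz(3)] by (simp add: mult.assoc)
    have r2: "jtheta (p*y*z0) p = - jtheta (y*z0) p / (y*z0)"
      using jt_shift[OF p(2) p0 yz(1)] by (simp add: mult.assoc)
    have r3: "jtheta (p*y*z1) p = - jtheta (y*z1) p / (y*z1)"
      using jt_shift[OF p(2) p0 yz(2)] by (simp add: mult.assoc)
    have Rp: "R (p*y) = - y * R y"
      unfolding R_def r1 r2 r3 using y z0 z1 j0 j1 jy0 jy1 by (simp add: field_simps)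
    show "\<Phi> (p * y) = - y * \<Phi> y"
      unfolding \<Phi>_def h1 h0 t1 t0 Rp using j0 j1 by (simp add: field_simps)
  next
    fix s assume "s \<in> P"
    then obtain k where k: "s = (1/z0) * p powi k \<or> s = (1/z1) * p powi k" by (auto simp: P_def)
    have sh: "p powi (-k) * ((1/c) * p powi k) = 1/c" for c
      using p0 by (simp add: power_int_minus field_simps)
    show "\<exists>k::int. \<exists>c. (\<Phi> \<longlongrightarrow> c) (at (p powi k * s))"
    proof (cases "s = (1/z0) * p powi k")
      case True
      then show ?thesis using L0 sh[of z0] by metis
    next
      case False
      then have "s = (1/z1) * p powi k" using k by blast
      then show ?thesis using L1 sh[of z1] by metis
    qed
  qed
  from E.ell_main obtain c where c1: "\<And>y. y \<noteq> 0 \<Longrightarrow> y \<notin> P \<Longrightarrow> \<Phi> y = c" and c2: "\<And>y. y \<noteq> 0 \<Longrightarrow> c = - y * c"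
    by blast
  have "c = 0" using c2[of 1] by simp
  then have "\<Phi> x = 0" using c1[OF x xP] by simp
  moreover have "x * (z0 * z1) = x * z0 * z1" by (simp add: mult.assoc)
  ultimately show ?thesis by (simp add: \<Phi>_def R_def J_def)
qed


definition ng :: "complex \<Rightarrow> complex \<Rightarrow> bool" where "ng p w \<longleftrightarrow> (\<forall>k::int. w \<noteq> p powi k)"

lemma md_parts:
  assumes "m_defined x p z"
  shows "x \<noteq> 0" "z \<noteq> 0" "jtheta z p \<noteq> 0" "\<And>r. 1 - p powi (r - 1) * x * z \<noteq> 0"
  using assms unfolding m_defined_def by auto

lemma md_ng:
  assumes "m_defined x p z" "p \<noteq> 0"
  shows "ng p (x*z)"
  unfolding ng_def
proof
  fix k :: int
  show "x * z \<noteq> p powi k"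
  proof
    assume e: "x * z = p powi k"
    have "p powi ((1 - k) - 1) * x * z = p powi (-k) * p powi k" using e by (simp add: mult.assoc)
    also have "\<dots> = 1" using assms(2) by (simp add: power_int_minus)
    finally show False using md_parts(4)[OF assms(1), of "1 - k"] by simp
  qed
qed

lemma ng_jt: "0 < norm p \<Longrightarrow> norm p < 1 \<Longrightarrow> w \<noteq> 0 \<Longrightarrow> ng p w \<Longrightarrow> jtheta w p \<noteq> 0"
  unfolding ng_def by (rule jt_nonzero) auto

lemma jt_ng: "0 < norm p \<Longrightarrow> norm p < 1 \<Longrightarrow> jtheta w p \<noteq> 0 \<Longrightarrow> ng p w"
  unfolding ng_def using jt_zero by blast

lemma ng_inv:
  fixes p w :: complex
  assumes "p \<noteq> 0" "ng p w" shows "ng p (1/w)"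
  unfolding ng_def
proof
  fix k :: int
  show "1/w \<noteq> p powi k"
  proof
    assume h: "1/w = p powi k"
    have "p powi k \<noteq> 0" using assms(1) by simp
    then have "w \<noteq> 0" using h by auto
    have "w = inverse (1/w)" by simp
    then have "w = inverse (p powi k)" unfolding h .
    then have "w = p powi (-k)" by (simp add: power_int_minus)
    then show False using assms(2) unfolding ng_def by blast
  qed
qed

lemma ng_div:
  fixes p w :: complex
  assumes "p \<noteq> 0" "w \<noteq> 0" "ng p w" shows "ng p (p/w)"
  unfolding ng_def
proof
  fix k :: int
  show "p/w \<noteq> p powi k"
  proof
    assume "p/w = p powi k"
    then have "w = p / p powi k" using assms(1,2) by (simp add: field_simps)
    also have "\<dots> = p powi (1 - k)" using assms(1) by (simp add: power_int_diff)
    finally show False using assms(3) unfolding ng_def by blast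
  qed
qed

lemma powi_inj:
  fixes q :: complex
  assumes "0 < norm q" "norm q < 1" "q powi a = q powi b"
  shows "a = b"
proof (rule ccontr)
  assume "a \<noteq> b"
  have e: "norm q powi a = norm q powi b" using assms(3) by (metis norm_power_int)
  show False
  proof (cases "a < b")
    case True
    then have "norm q powi b < norm q powi a" using assms by (intro power_int_strict_decreasing) auto
    then show False using e by simp
  next
    case False
    then have "b < a" using \<open>a \<noteq> b\<close> by simp
    then have "norm q powi a < norm q powi b" using assms by (intro power_int_strict_decreasing) auto
    then show False using e by simp
  qed
qed

lemma ng_qpow:
  fixes q :: complex
  assumes "0 < norm q" "norm q < 1" "\<not> (3 dvd a)"
  shows "ng (q^3) (q powi a)"
  unfolding ng_def
proof
  fix k :: int
  have "(q^3) powi k = q powi (3*k)" by (simp add: power_int_mult)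
  moreover have "q powi a \<noteq> q powi (3*k)"
  proof
    assume "q powi a = q powi (3*k)"
    then have "a = 3*k" using powi_inj[OF assms(1,2)] by blast
    then show False using assms(3) by simp
  qed
  ultimately show "q powi a \<noteq> (q^3) powi k" by simp
qed

lemma m_diff3:
  fixes p x z0 z1 :: complex
  assumes p: "0 < norm p" "norm p < 1"
    and m0: "m_defined x p z0" and m1: "m_defined x p z1" and jd: "jtheta d p \<noteq> 0"
    and e: "d = z1/z0" "X = x*z0*z1" "A0 = x*z0" "A1 = x*z1"
  shows "appell_m x p z1 - appell_m x p z0
     = z0 * qpoch p p ^ 3 * jtheta d p * jtheta X p / (jtheta z0 p * jtheta z1 p * jtheta A0 p * jtheta A1 p)"
proof -
  have p0: "p \<noteq> 0" using p by auto
  have jx0: "jtheta (x*z0) p \<noteq> 0"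
    by (rule ng_jt[OF p _ md_ng[OF m0 p0]]) (use md_parts(1,2)[OF m0] in simp)
  have jx1: "jtheta (x*z1) p \<noteq> 0"
    by (rule ng_jt[OF p _ md_ng[OF m1 p0]]) (use md_parts(1,2)[OF m1] in simp)
  show ?thesis unfolding appell_hsum e
    by (rule m_diff[OF p md_parts(2)[OF m0] md_parts(2)[OF m1] md_parts(3)[OF m0] md_parts(3)[OF m1]
          jd[unfolded e] md_parts(1)[OF m0] jx0 jx1])
qed

theorem lemma2p3:
  fixes q z :: complex
  assumes "0 < norm q" and "norm q < 1" and "z \<noteq> 0"
    and "m_defined q (q^3) z"
    and "m_defined (z^3 * q) (q^3) (inverse z)"
    and "m_defined q (q^3) (inverse z)"
    and "m_defined (inverse z ^ 3 * q) (q^3) z"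
    and "m_defined (inverse z ^ 3 * q) (q^3) (z^2)"
    and "m_defined (z^3 * q) (q^3) (inverse z ^ 2)"
  shows "z * jtheta (inverse z * q) q * appell_m q (q^3) z
       + z * jtheta (inverse z ^ 2 * q) q * appell_m (z^3 * q) (q^3) (inverse z)
       + z^2 * jtheta (z * q) q * appell_m q (q^3) (inverse z)
       + z^2 * jtheta (z^2 * q) q * appell_m (inverse z ^ 3 * q) (q^3) z
     = - jtheta (z^2) q * appell_m (inverse z ^ 3 * q) (q^3) (z^2)
       + z * jtheta (z^2) q * appell_m (z^3 * q) (q^3) (inverse z ^ 2)"
proof -
  have q: "0 < norm q" "norm q < 1" by (rule assms)+
  have q0: "q \<noteq> 0" using q by auto
  have z: "z \<noteq> 0" by (rule assms(3))
  define Q where "Q = q^3"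
  have Qn: "0 < norm Q" "norm Q < 1" using q by (simp_all add: Q_def norm_power power_less_one_iff)
  have Q0: "Q \<noteq> 0" using q0 by (simp add: Q_def)
  have m4: "m_defined q Q z" using assms(4) by (simp add: Q_def)
  have m5: "m_defined (z^3 * q) Q (inverse z)" using assms(5) by (simp add: Q_def)
  have m6: "m_defined q Q (inverse z)" using assms(6) by (simp add: Q_def)
  have m7: "m_defined (inverse z ^ 3 * q) Q z" using assms(7) by (simp add: Q_def)
  have m8: "m_defined (inverse z ^ 3 * q) Q (z^2)" using assms(8) by (simp add: Q_def)
  have m9: "m_defined (z^3 * q) Q (inverse z ^ 2)" using assms(9) by (simp add: Q_def)
  have ng_z: "ng Q z" using jt_ng[OF Qn md_parts(3)[OF m4]] .
  have ng_qz: "ng Q (q*z)" using md_ng[OF m4 Q0] .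
  have ng_qiz: "ng Q (q/z)" using md_ng[OF m6 Q0] unfolding divide_inverse .
  have ng_z2: "ng Q (z^2)" using jt_ng[OF Qn md_parts(3)[OF m8]] .
  have ng_qz2: "ng Q (q*z^2)"
  proof -
    have e: "z^3 * q * inverse z = q * z^2" using z by (simp add: field_simps power2_eq_square power3_eq_cube)
    show ?thesis using md_ng[OF m5 Q0] unfolding e .
  qed
  have ng_qiz2: "ng Q (q/z^2)"
  proof -
    have e: "inverse z ^ 3 * q * z = q / z^2" using z by (simp add: field_simps power2_eq_square power3_eq_cube)
    show ?thesis using md_ng[OF m7 Q0] unfolding e .
  qed
  have ng_q: "ng Q q" using ng_qpow[OF q, of 1] by (simp add: Q_def)
  have ng_iq: "ng Q (1/q)" using ng_inv[OF Q0 ng_q] .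
  have ng_q2: "ng Q (q^2)" using ng_qpow[OF q, of 2] by (simp add: Q_def)
  define a1 where "a1 = jtheta z Q"
  define a2 where "a2 = jtheta (q*z) Q"
  define a3 where "a3 = jtheta (q/z) Q"
  define b1 where "b1 = jtheta (z^2) Q"
  define b2 where "b2 = jtheta (q*z^2) Q"
  define b3 where "b3 = jtheta (q/z^2) Q"
  define cq where "cq = jtheta q Q"
  define J where "J = qpoch Q Q ^ 3"
  define K where "K = qpoch q q / qpoch Q Q ^ 3"
  have a1: "a1 \<noteq> 0" unfolding a1_def by (rule ng_jt[OF Qn _ ng_z]) (use z in simp)
  have a2: "a2 \<noteq> 0" unfolding a2_def by (rule ng_jt[OF Qn _ ng_qz]) (use z q0 in simp)
  have a3: "a3 \<noteq> 0" unfolding a3_def by (rule ng_jt[OF Qn _ ng_qiz]) (use z q0 in simp)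
  have b1: "b1 \<noteq> 0" unfolding b1_def by (rule ng_jt[OF Qn _ ng_z2]) (use z in simp)
  have b2: "b2 \<noteq> 0" unfolding b2_def by (rule ng_jt[OF Qn _ ng_qz2]) (use z q0 in simp)
  have b3: "b3 \<noteq> 0" unfolding b3_def by (rule ng_jt[OF Qn _ ng_qiz2]) (use z q0 in simp)
  have cq: "cq \<noteq> 0" unfolding cq_def by (rule ng_jt[OF Qn _ ng_q]) (use q0 in simp)
  have J: "J \<noteq> 0"
  proof -
    have "qpoch Q Q \<noteq> 0"
    proof (rule qp_nonzero[OF Qn(2)])
      fix n
      have "norm (Q * Q^n) = norm Q ^ Suc n" by (simp add: norm_mult norm_power)
      also have "\<dots> < 1" using Qn(2) by (simp only: power_less_one_iff norm_ge_zero) simp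
      finally show "Q * Q^n \<noteq> 1" by auto
    qed
    then show ?thesis by (simp add: J_def)
  qed
  have jinvz: "jtheta (inverse z) Q = - a1 / z"
    using jt_inv[OF Qn(2) Q0 z] by (simp add: a1_def inverse_eq_divide)
  have jinvz2: "jtheta (inverse z ^ 2) Q = - b1 / z^2"
  proof -
    have z2: "z^2 \<noteq> 0" using z by simp
    have e: "inverse z ^ 2 = 1 / z^2" by (simp add: power_one_over inverse_eq_divide)
    from jt_inv[OF Qn(2) Q0 z2] show ?thesis unfolding e b1_def .
  qed
  have jzq: "jtheta (z/q) Q = - (z/q) * a3"
  proof -
    have "q/z \<noteq> 0" using z q0 by simp
    from jt_inv[OF Qn(2) Q0 this] show ?thesis by (simp add: a3_def)
  qed
  have jq2z: "jtheta (q^2*z) Q = a3"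
  proof -
    have "q/z \<noteq> 0" using z q0 by simp
    from jt_sym[OF Q0 this] have "jtheta (Q / (q/z)) Q = a3" by (simp add: a3_def)
    moreover have "Q / (q/z) = q^2*z" using q0 z by (simp add: Q_def field_simps power2_eq_square power3_eq_cube)
    ultimately show ?thesis by simp
  qed
  have jq2z2: "jtheta (q^2*z^2) Q = b3"
  proof -
    have "q/z^2 \<noteq> 0" using z q0 by simp
    from jt_sym[OF Q0 this] have "jtheta (Q / (q/z^2)) Q = b3" by (simp add: b3_def)
    moreover have "Q / (q/z^2) = q^2*z^2" using q0 z by (simp add: Q_def field_simps power2_eq_square power3_eq_cube)
    ultimately show ?thesis by simp
  qed
  have jq2: "jtheta (q^2) Q = cq"
  proof -
    from jt_sym[OF Q0 q0] have "jtheta (Q / q) Q = cq" by (simp add: cq_def)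
    moreover have "Q / q = q^2" using q0 by (simp add: Q_def power2_eq_square power3_eq_cube)
    ultimately show ?thesis by simp
  qed
  have jiq: "jtheta (1/q) Q = - cq / q" using jt_inv[OF Qn(2) Q0 q0] by (simp add: cq_def)
  have jz: "jtheta z q = K * (a1 * a2 * a3)"
    using jt_split3[OF q(2) q0 z] jq2z by (simp add: K_def a1_def a2_def a3_def Q_def)
  have jz2: "jtheta (z^2) q = K * (b1 * b2 * b3)"
  proof -
    have "z^2 \<noteq> 0" using z by simp
    from jt_split3[OF q(2) q0 this] show ?thesis using jq2z2 by (simp add: K_def b1_def b2_def b3_def Q_def)
  qed
  have s1: "jtheta (inverse z * q) q = jtheta z q"
    using jt_sym[OF q0 z] by (simp add: divide_inverse mult.commute)
  have s2: "jtheta (inverse z ^ 2 * q) q = jtheta (z^2) q"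
  proof -
    have "z^2 \<noteq> 0" using z by simp
    from jt_sym[OF q0 this] show ?thesis by (simp add: divide_inverse mult.commute power_inverse)
  qed
  have s3: "jtheta (z * q) q = - jtheta z q / z"
    using jt_shift[OF q(2) q0 z] by (simp add: mult.commute)
  have s4: "jtheta (z^2 * q) q = - jtheta (z^2) q / z^2"
  proof -
    have "z^2 \<noteq> 0" using z by simp
    from jt_shift[OF q(2) q0 this] show ?thesis by (simp add: mult.commute)
  qed
  define mA where "mA = appell_m q Q z"
  define mB where "mB = appell_m (z^3 * q) Q (inverse z)"
  define mC where "mC = appell_m q Q (inverse z)"
  define mD where "mD = appell_m (inverse z ^ 3 * q) Q z"
  define mE where "mE = appell_m (inverse z ^ 3 * q) Q (z^2)"
  define mF where "mF = appell_m (z^3 * q) Q (inverse z ^ 2)"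
  have D1: "mA - mC = - J * cq * b1 / (a1^2 * a2 * a3)"
  proof -
    have "mA - mC = inverse z * qpoch Q Q ^ 3 * jtheta (z^2) Q * jtheta q Q /
        (jtheta (inverse z) Q * jtheta z Q * jtheta (q/z) Q * jtheta (q*z) Q)"
      unfolding mA_def mC_def
      by (rule m_diff3[OF Qn m6 m4]) (use b1 z in \<open>simp_all add: b1_def field_simps power2_eq_square\<close>)
    also have "\<dots> = - J * cq * b1 / (a1^2 * a2 * a3)"
      unfolding jinvz J_def[symmetric] a1_def[symmetric] a2_def[symmetric] a3_def[symmetric] b1_def[symmetric] cq_def[symmetric]
      using z a1 a2 a3 by (simp add: field_simps power2_eq_square)
    finally show ?thesis .
  qed
  have D2: "mB - mF = z * J * cq / (b1 * a2 * b2)"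
  proof -
    have "mB - mF = inverse z ^ 2 * qpoch Q Q ^ 3 * jtheta z Q * jtheta q Q /
        (jtheta (inverse z ^ 2) Q * jtheta (inverse z) Q * jtheta (q*z) Q * jtheta (q*z^2) Q)"
      unfolding mB_def mF_def
      by (rule m_diff3[OF Qn m9 m5]) (use a1 z in \<open>simp_all add: a1_def field_simps power2_eq_square power3_eq_cube\<close>)
    also have "\<dots> = z * J * cq / (b1 * a2 * b2)"
      unfolding jinvz jinvz2 J_def[symmetric] a1_def[symmetric] a2_def[symmetric] b2_def[symmetric] cq_def[symmetric]
      using z a1 a2 b1 b2 by (simp add: field_simps power2_eq_square)
    finally show ?thesis .
  qed
  have D3: "mE - mD = z * J * cq / (b1 * a3 * b3)"
  proof -
    have "mE - mD = z * qpoch Q Q ^ 3 * jtheta z Q * jtheta q Q /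
        (jtheta z Q * jtheta (z^2) Q * jtheta (q/z^2) Q * jtheta (q/z) Q)"
      unfolding mE_def mD_def
      by (rule m_diff3[OF Qn m7 m8]) (use a1 z in \<open>simp_all add: a1_def field_simps power2_eq_square power3_eq_cube\<close>)
    also have "\<dots> = z * J * cq / (b1 * a3 * b3)"
      unfolding J_def[symmetric] a1_def[symmetric] a3_def[symmetric] b1_def[symmetric] b3_def[symmetric] cq_def[symmetric]
      using z a1 a3 b1 b3 by (simp add: field_simps)
    finally show ?thesis .
  qed
  have mqz: "m_defined q Q (q*z)"
    unfolding m_defined_def
  proof (intro conjI allI)
    show "q \<noteq> 0" "q * z \<noteq> 0" using q0 z by auto
    show "jtheta (q*z) Q \<noteq> 0" using a2 by (simp add: a2_def)
    fix r :: int
    have "q/z \<noteq> 0" using q0 z by simp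
    from ng_div[OF Q0 this ng_qiz] have "ng Q (Q/(q/z))" .
    moreover have "Q/(q/z) = q * (q*z)" using q0 z by (simp add: Q_def field_simps power2_eq_square power3_eq_cube)
    ultimately have "\<forall>k::int. q * (q*z) \<noteq> Q powi k" by (simp add: ng_def)
    then show "1 - Q powi (r - 1) * q * (q * z) \<noteq> 0" using notgeo_den[OF _ Q0] by blast
  qed
  have mzq: "m_defined q Q (z/q)"
    unfolding m_defined_def
  proof (intro conjI allI)
    show "q \<noteq> 0" "z / q \<noteq> 0" using q0 z by auto
    show "jtheta (z/q) Q \<noteq> 0" using a3 z q0 by (simp add: jzq)
    fix r :: int
    have "\<forall>k::int. q * (z/q) \<noteq> Q powi k" using ng_z q0 by (simp add: ng_def)
    then show "1 - Q powi (r - 1) * q * (z / q) \<noteq> 0" using notgeo_den[OF _ Q0] by blast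
  qed
  have jiq_nz: "jtheta (1/q) Q \<noteq> 0" by (rule ng_jt[OF Qn _ ng_iq]) (use q0 in simp)
  define m0 where "m0 = appell_m q Q (z/q)"
  define m1 where "m1 = appell_m q Q (q*z)"
  have T1: "m1 - m0 = - J * cq * b2 / (a1 * a2 * a3^2)"
  proof -
    have "m1 - m0 = (z/q) * qpoch Q Q ^ 3 * jtheta (q^2) Q * jtheta (q*z^2) Q /
        (jtheta (z/q) Q * jtheta (q*z) Q * jtheta z Q * jtheta (q^2*z) Q)"
      unfolding m1_def m0_def
      by (rule m_diff3[OF Qn mzq mqz]) (use cq q0 z jq2 in \<open>simp_all add: field_simps power2_eq_square\<close>)
    also have "\<dots> = - J * cq * b2 / (a1 * a2 * a3^2)"
      unfolding jzq jq2 jq2z J_def[symmetric] a1_def[symmetric] a2_def[symmetric] b2_def[symmetric] cq_def[symmetric]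
      using z q0 a1 a2 a3 by (simp add: field_simps power2_eq_square)
    finally show ?thesis .
  qed
  have T2: "mA - m1 = - z * J * cq * b3 / (a1 * a2^2 * a3)"
  proof -
    have "mA - m1 = (q*z) * qpoch Q Q ^ 3 * jtheta (1/q) Q * jtheta (q^2*z^2) Q /
        (jtheta (q*z) Q * jtheta z Q * jtheta (q^2*z) Q * jtheta (q*z) Q)"
      unfolding mA_def m1_def
      by (rule m_diff3[OF Qn mqz m4]) (use q0 z jiq_nz in \<open>simp_all add: field_simps power2_eq_square\<close>)
    also have "\<dots> = - z * J * cq * b3 / (a1 * a2^2 * a3)"
      unfolding jiq jq2z jq2z2 J_def[symmetric] a1_def[symmetric] a2_def[symmetric] cq_def[symmetric]
      using z q0 a1 a2 a3 by (simp add: field_simps power2_eq_square)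
    finally show ?thesis .
  qed
  have T3: "mA - m0 = - J * cq * b1 / (a1^2 * a2 * a3)"
  proof -
    have "mA - m0 = (z/q) * qpoch Q Q ^ 3 * jtheta q Q * jtheta (z^2) Q /
        (jtheta (z/q) Q * jtheta z Q * jtheta z Q * jtheta (q*z) Q)"
      unfolding mA_def m0_def
      by (rule m_diff3[OF Qn mzq m4]) (use cq q0 z in \<open>simp_all add: cq_def field_simps power2_eq_square\<close>)
    also have "\<dots> = - J * cq * b1 / (a1^2 * a2 * a3)"
      unfolding jzq J_def[symmetric] a1_def[symmetric] a2_def[symmetric] b1_def[symmetric] cq_def[symmetric]
      using z q0 a1 a2 a3 by (simp add: field_simps power2_eq_square)
    finally show ?thesis .
  qed
  have key: "b1 / a1 = b2 / a3 + z * b3 / a2"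
  proof -
    have "(m1 - m0) + (mA - m1) = mA - m0" by simp
    then have "- J * cq * b2 / (a1 * a2 * a3^2) + - z * J * cq * b3 / (a1 * a2^2 * a3) = - J * cq * b1 / (a1^2 * a2 * a3)"
      unfolding T1 T2 T3 .
    then have F: "(J*cq*a1*a2*a3) * (a2*a3*b1) = (J*cq*a1*a2*a3) * (a1*a2*b2 + a1*a3*b3*z)"
      using J cq a1 a2 a3 by (simp add: field_simps power2_eq_square)
    have nzF: "J*cq*a1*a2*a3 \<noteq> 0" using J cq a1 a2 a3 by simp
    have "a2*a3*b1 = a1*a2*b2 + a1*a3*b3*z" using F nzF by simp
    then show ?thesis using a1 a2 a3 by (simp add: field_simps)
  qed
  have X: "z * jtheta z q * (mA - mC) + jtheta (z^2) q * (z * (mB - mF) + (mE - mD)) = 0"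
  proof -
    have "z * jtheta z q * (mA - mC) + jtheta (z^2) q * (z * (mB - mF) + (mE - mD))
        = K * J * cq * z * (b2 / a3 + z * b3 / a2 - b1 / a1)"
      unfolding D1 D2 D3 jz jz2 using z a1 a2 a3 b1 b2 b3 by (simp add: field_simps power2_eq_square)
    also have "\<dots> = 0" using key by simp
    finally show ?thesis .
  qed
  have r1: "z^2 * (- jtheta z q / z) = - z * jtheta z q" using z by (simp add: power2_eq_square)
  have r2: "z^2 * (- jtheta (z^2) q / z^2) = - jtheta (z^2) q" using z by simp
  have G: "z * jtheta z q * mA + z * jtheta (z^2) q * mB + z^2 * (- jtheta z q / z) * mC
      + z^2 * (- jtheta (z^2) q / z^2) * mD = - jtheta (z^2) q * mE + z * jtheta (z^2) q * mF"
  proof -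
    have "(z * jtheta z q * mA + z * jtheta (z^2) q * mB + z^2 * (- jtheta z q / z) * mC
      + z^2 * (- jtheta (z^2) q / z^2) * mD) - (- jtheta (z^2) q * mE + z * jtheta (z^2) q * mF)
      = z * jtheta z q * (mA - mC) + jtheta (z^2) q * (z * (mB - mF) + (mE - mD))"
      unfolding r1 r2 by (simp add: algebra_simps)
    then show ?thesis using X by simp
  qed
  show ?thesis unfolding s1 s2 s3 s4 using G unfolding mA_def mB_def mC_def mD_def mE_def mF_def Q_def .
qed


end
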